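(* Let $k\ge2$, $1\le m<k$, and alternatives $\ell=1,\dots,k$ with i.i.d. replications (independent across alternatives) whose means are pairwise distinct and ordered $\mu_{\langle 1\rangle}>\dots>\mu_{\langle k\rangle}$, satisfying Assumptions 1–4 of the context, and let $G_{ij}$ be as in the context. Consider (P1): maximize $z$ over $(z,r_{\langle1\rangle},\dots,r_{\langle k\rangle})$ subject to $G_{ij}(r_{\langle i\rangle},r_{\langle j\rangle})-z\ge0$ for all $i\in\{1,\dots,m\}$, $j\in\{m+1,\dots,k\}$, $\sum_{\ell=1}^kr_{\langle\ell\rangle}=1$, $r_{\langle\ell\rangle}\ge0$; (P2): maximize $z$ subject to $\min_{j\in\{m+1,\dots,k\}}G_{ij}(r_{\langle i\rangle},r_{\langle j\rangle})=z$ for all $i\in\{1,\dots,m\}$, $\min_{i\in\{1,\dots,m\}}G_{ij}(r_{\langle i\rangle},r_{\langle j\rangle})=z$ for all $j\in\{m+1,\dots,k\}$, $\sum_{\ell=1}^kr_{\langle\ell\rangle}=1$, $r_{\langle\ell\rangle}>0$. Then (P1) and (P2) are equivalent: $r^*=(r^*_{\langle1\rangle},\dots,r^*_{\langle k\rangle})$ is an optimal solution of (P1) if and only if it is an optimal solution of (P2).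
   Context: $G_{ij}(r_{\langle i\rangle},r_{\langle j\rangle})=\inf_{x\in\mathbb R}\big(r_{\langle i\rangle}\Lambda^*_{\langle i\rangle}(x)+r_{\langle j\rangle}\Lambda^*_{\langle j\rangle}(x)\big)$, where $\Lambda^*_\ell(x)=\sup_\lambda\{\lambda x-\Lambda_\ell(\lambda)\}$. $\bar X_\ell(n)$ is the sample mean of $n$ replications of alternative $\ell$, $\Lambda^{(n)}_\ell(\lambda)=\log\mathbb E[e^{\lambda\bar X_\ell(n)}]$. Assumption 1: $\Lambda_\ell(\lambda)=\lim_{n\to\infty}\frac1n\Lambda^{(n)}_\ell(n\lambda)$ exists as an extended real number for all $\lambda$. With $\mathcal D_{\Lambda_\ell}=\{\lambda:\Lambda_\ell(\lambda)<\infty\}$, interior $\mathcal D^o_{\Lambda_\ell}$, and $\mathcal F_\ell=\{\Lambda'_\ell(\lambda):\lambda\in\mathcal D^o_{\Lambda_\ell}\}$, interior $\mathcal F^o_\ell$: Assumption 2: $0\in\mathcal D^o_{\Lambda_\ell}$. Assumption 3: $\Lambda_\ell$ strictly convex, continuous on $\mathcal D^o_{\Lambda_\ell}$ and steep. Assumption 4: $[\mu_{\langle k\rangle},\mu_{\langle1\rangle}]\subset\bigcap_\ell\mathcal F^o_\ell$. *)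

theory Defs
  imports "HOL-Probability.Probability"
begin

text \<open>Alternatives are labelled directly by their rank: alternative l (1 <= l <= k)
  is the alternative with the l-th largest mean, i.e. l plays the role of <l>.
  X l n is the n-th replication (n = 0,1,2,...) of alternative l on the probability space M.\<close>

definition sample_mean :: "(nat \<Rightarrow> nat \<Rightarrow> 'a \<Rightarrow> real) \<Rightarrow> nat \<Rightarrow> nat \<Rightarrow> 'a \<Rightarrow> real" where
  "sample_mean X l n = (\<lambda>\<omega>. (\<Sum>i<n. X l i \<omega>) / real n)"

definition log_mgf :: "'a measure \<Rightarrow> ('a \<Rightarrow> real) \<Rightarrow> real \<Rightarrow> ereal" where
  "log_mgf M Y lam =
     (let I = (\<integral>\<^sup>+ \<omega>. ennreal (exp (lam * Y \<omega>)) \<partial>M)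
      in if I = \<infinity> then \<infinity> else ereal (ln (enn2real I)))"

definition Lambda_n :: "'a measure \<Rightarrow> (nat \<Rightarrow> nat \<Rightarrow> 'a \<Rightarrow> real) \<Rightarrow> nat \<Rightarrow> nat \<Rightarrow> real \<Rightarrow> ereal" where
  "Lambda_n M X l n lam = log_mgf M (sample_mean X l n) lam"

definition Lambda_seq :: "'a measure \<Rightarrow> (nat \<Rightarrow> nat \<Rightarrow> 'a \<Rightarrow> real) \<Rightarrow> nat \<Rightarrow> real \<Rightarrow> nat \<Rightarrow> ereal" where
  "Lambda_seq M X l lam n = ereal (1 / real n) * Lambda_n M X l n (real n * lam)"

definition Lambda :: "'a measure \<Rightarrow> (nat \<Rightarrow> nat \<Rightarrow> 'a \<Rightarrow> real) \<Rightarrow> nat \<Rightarrow> real \<Rightarrow> ereal" where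
  "Lambda M X l lam = lim (Lambda_seq M X l lam)"

definition dom_Lambda :: "'a measure \<Rightarrow> (nat \<Rightarrow> nat \<Rightarrow> 'a \<Rightarrow> real) \<Rightarrow> nat \<Rightarrow> real set" where
  "dom_Lambda M X l = {lam. Lambda M X l lam < \<infinity>}"

text \<open>Real-valued version of Lambda_l (used on the interior of D_l, where it is finite).\<close>
definition LambdaR :: "'a measure \<Rightarrow> (nat \<Rightarrow> nat \<Rightarrow> 'a \<Rightarrow> real) \<Rightarrow> nat \<Rightarrow> real \<Rightarrow> real" where
  "LambdaR M X l lam = real_of_ereal (Lambda M X l lam)"

definition F_set :: "'a measure \<Rightarrow> (nat \<Rightarrow> nat \<Rightarrow> 'a \<Rightarrow> real) \<Rightarrow> nat \<Rightarrow> real set" where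
  "F_set M X l = (\<lambda>t. deriv (LambdaR M X l) t) ` interior (dom_Lambda M X l)"

definition strictly_convex_on :: "real set \<Rightarrow> (real \<Rightarrow> real) \<Rightarrow> bool" where
  "strictly_convex_on S f \<longleftrightarrow>
     (\<forall>x\<in>S. \<forall>y\<in>S. \<forall>u::real. x \<noteq> y \<and> 0 < u \<and> u < 1 \<longrightarrow>
        f ((1 - u) * x + u * y) < (1 - u) * f x + u * f y)"

definition steep :: "real set \<Rightarrow> (real \<Rightarrow> real) \<Rightarrow> bool" where
  "steep S f \<longleftrightarrow>
     (\<forall>lam0 \<in> frontier (interior S). \<forall>s :: nat \<Rightarrow> real.
        (\<forall>n. s n \<in> interior S) \<and> s \<longlonglongrightarrow> lam0 \<longrightarrow>
        filterlim (\<lambda>n. \<bar>deriv f (s n)\<bar>) at_top sequentially)"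

definition rate_fun :: "'a measure \<Rightarrow> (nat \<Rightarrow> nat \<Rightarrow> 'a \<Rightarrow> real) \<Rightarrow> nat \<Rightarrow> real \<Rightarrow> ereal" where
  "rate_fun M X l x = (SUP lam. ereal (lam * x) - Lambda M X l lam)"

definition G :: "'a measure \<Rightarrow> (nat \<Rightarrow> nat \<Rightarrow> 'a \<Rightarrow> real) \<Rightarrow> nat \<Rightarrow> nat \<Rightarrow> real \<Rightarrow> real \<Rightarrow> ereal" where
  "G M X i j ri rj =
     (INF x. ereal ri * rate_fun M X i x + ereal rj * rate_fun M X j x)"

definition feasible_P1 :: "'a measure \<Rightarrow> (nat \<Rightarrow> nat \<Rightarrow> 'a \<Rightarrow> real) \<Rightarrow> nat \<Rightarrow> nat \<Rightarrow>
    real \<Rightarrow> (nat \<Rightarrow> real) \<Rightarrow> bool" where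
  "feasible_P1 M X k m z r \<longleftrightarrow>
     (\<forall>i\<in>{1..m}. \<forall>j\<in>{m+1..k}. G M X i j (r i) (r j) - ereal z \<ge> 0) \<and>
     (\<Sum>l=1..k. r l) = 1 \<and> (\<forall>l\<in>{1..k}. r l \<ge> 0)"

definition optimal_P1 :: "'a measure \<Rightarrow> (nat \<Rightarrow> nat \<Rightarrow> 'a \<Rightarrow> real) \<Rightarrow> nat \<Rightarrow> nat \<Rightarrow>
    (nat \<Rightarrow> real) \<Rightarrow> bool" where
  "optimal_P1 M X k m r \<longleftrightarrow>
     (\<exists>z. feasible_P1 M X k m z r \<and> (\<forall>z' r'. feasible_P1 M X k m z' r' \<longrightarrow> z' \<le> z))"

definition feasible_P2 :: "'a measure \<Rightarrow> (nat \<Rightarrow> nat \<Rightarrow> 'a \<Rightarrow> real) \<Rightarrow> nat \<Rightarrow> nat \<Rightarrow>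
    real \<Rightarrow> (nat \<Rightarrow> real) \<Rightarrow> bool" where
  "feasible_P2 M X k m z r \<longleftrightarrow>
     (\<forall>i\<in>{1..m}. Min ((\<lambda>j. G M X i j (r i) (r j)) ` {m+1..k}) = ereal z) \<and>
     (\<forall>j\<in>{m+1..k}. Min ((\<lambda>i. G M X i j (r i) (r j)) ` {1..m}) = ereal z) \<and>
     (\<Sum>l=1..k. r l) = 1 \<and> (\<forall>l\<in>{1..k}. r l > 0)"

definition optimal_P2 :: "'a measure \<Rightarrow> (nat \<Rightarrow> nat \<Rightarrow> 'a \<Rightarrow> real) \<Rightarrow> nat \<Rightarrow> nat \<Rightarrow>
    (nat \<Rightarrow> real) \<Rightarrow> bool" where
  "optimal_P2 M X k m r \<longleftrightarrow>
     (\<exists>z. feasible_P2 M X k m z r \<and> (\<forall>z' r'. feasible_P2 M X k m z' r' \<longrightarrow> z' \<le> z))"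

end

theory Submission
  imports Defs
begin

definition mgf :: "'a measure \<Rightarrow> ('a \<Rightarrow> real) \<Rightarrow> real \<Rightarrow> ennreal" where
  "mgf M Y lam = (\<integral>\<^sup>+ \<omega>. ennreal (exp (lam * Y \<omega>)) \<partial>M)"

lemma log_mgf_mgf: "log_mgf M Y lam = (if mgf M Y lam = \<infinity> then \<infinity> else ereal (ln (enn2real (mgf M Y lam))))"
  by (simp add: log_mgf_def mgf_def Let_def)

lemma log_mgf_inf_iff: "log_mgf M Y lam = \<infinity> \<longleftrightarrow> mgf M Y lam = \<infinity>"
  by (simp add: log_mgf_mgf)

lemma log_mgf_fin: "log_mgf M Y lam < \<infinity> \<longleftrightarrow> mgf M Y lam < \<infinity>"
  by (simp add: log_mgf_mgf less_top)

lemma prod_single_times: "(\<Prod>p\<in>{a} \<times> B. f p) = (\<Prod>i\<in>B. f (a, i))"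
proof -
  have "{a} \<times> B = (\<lambda>i. (a, i)) ` B" by auto
  then show ?thesis by (simp add: prod.reindex inj_on_def)
qed

context prob_space
begin

lemma mgf_pos:
  assumes Y: "Y \<in> borel_measurable M"
  shows "0 < mgf M Y lam"
proof -
  have "mgf M Y lam \<noteq> 0"
  proof
    assume "mgf M Y lam = 0"
    then have "AE \<omega> in M. ennreal (exp (lam * Y \<omega>)) = 0"
      unfolding mgf_def using Y by (subst (asm) nn_integral_0_iff_AE) auto
    then have "AE \<omega> in M. False" by simp
    then show False by simp
  qed
  then show ?thesis using not_gr_zero by blast
qed

lemma mgf_real:
  assumes Y: "Y \<in> borel_measurable M" and fin: "mgf M Y lam < \<infinity>"
  shows "mgf M Y lam = ennreal (enn2real (mgf M Y lam))" "0 < enn2real (mgf M Y lam)"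
    "log_mgf M Y lam = ereal (ln (enn2real (mgf M Y lam)))"
proof -
  show "mgf M Y lam = ennreal (enn2real (mgf M Y lam))" using fin by simp
  show "0 < enn2real (mgf M Y lam)" using fin mgf_pos[OF Y, of lam]
    by (simp add: enn2real_positive_iff)
  show "log_mgf M Y lam = ereal (ln (enn2real (mgf M Y lam)))" using fin by (simp add: log_mgf_mgf)
qed

lemma log_mgf_zero: "log_mgf M Y 0 = 0"
  by (simp add: log_mgf_def emeasure_space_1)

lemma integrable_of_mgf:
  assumes Y: "Y \<in> borel_measurable M" and d: "0 < d"
    and f1: "log_mgf M Y d < \<infinity>" and f2: "log_mgf M Y (-d) < \<infinity>"
  shows "integrable M Y"
proof (rule integrableI_bounded[OF Y])
  have pw: "ennreal (norm (Y \<omega>)) \<le> ennreal (1/d) * (ennreal (exp (d * Y \<omega>)) + ennreal (exp ((-d) * Y \<omega>)))" for \<omega>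
  proof -
    have "d * \<bar>Y \<omega>\<bar> < exp (d * \<bar>Y \<omega>\<bar>)"
      using exp_ge_add_one_self[of "d * \<bar>Y \<omega>\<bar>"] by linarith
    also have "exp (d * \<bar>Y \<omega>\<bar>) \<le> exp (d * Y \<omega>) + exp ((-d) * Y \<omega>)"
      by (cases "0 \<le> Y \<omega>") (auto simp: add_increasing add_increasing2 less_imp_le)
    finally have "\<bar>Y \<omega>\<bar> \<le> (1/d) * (exp (d * Y \<omega>) + exp ((-d) * Y \<omega>))"
      using d by (simp add: field_simps)
    then have "ennreal (norm (Y \<omega>)) \<le> ennreal ((1/d) * (exp (d * Y \<omega>) + exp ((-d) * Y \<omega>)))"
      by (intro ennreal_leI) simp
    also have "\<dots> = ennreal (1/d) * ennreal (exp (d * Y \<omega>) + exp ((-d) * Y \<omega>))"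
      using d by (intro ennreal_mult) auto
    also have "\<dots> = ennreal (1/d) * (ennreal (exp (d * Y \<omega>)) + ennreal (exp ((-d) * Y \<omega>)))"
      by (subst ennreal_plus) auto
    finally show ?thesis .
  qed
  have "(\<integral>\<^sup>+ \<omega>. ennreal (norm (Y \<omega>)) \<partial>M) \<le>
      (\<integral>\<^sup>+ \<omega>. ennreal (1/d) * (ennreal (exp (d * Y \<omega>)) + ennreal (exp ((-d) * Y \<omega>))) \<partial>M)"
    by (rule nn_integral_mono) (rule pw)
  also have "\<dots> = ennreal (1/d) * (mgf M Y d + mgf M Y (-d))"
    using Y by (simp add: nn_integral_cmult nn_integral_add mgf_def)
  also have "\<dots> < \<infinity>" using f1 f2 unfolding log_mgf_fin by (simp add: ennreal_mult_less_top)
  finally show "(\<integral>\<^sup>+ \<omega>. ennreal (norm (Y \<omega>)) \<partial>M) < \<infinity>" .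
qed

lemma log_mgf_jensen:
  assumes Y: "integrable M Y"
  shows "ereal (lam * expectation Y) \<le> log_mgf M Y lam"
proof (cases "mgf M Y lam = \<infinity>")
  case True then show ?thesis by (simp add: log_mgf_mgf)
next
  case False
  have Ym: "Y \<in> borel_measurable M" using Y by auto
  define mu where "mu = expectation Y"
  have int: "integrable M (\<lambda>\<omega>. exp (lam * Y \<omega>))"
    using False Ym by (intro integrableI_bounded) (auto simp: mgf_def less_top)
  have eq: "mgf M Y lam = ennreal (\<integral>\<omega>. exp (lam * Y \<omega>) \<partial>M)"
    unfolding mgf_def using int by (intro nn_integral_eq_integral) auto
  have "exp (lam * mu) = (\<integral>\<omega>. exp (lam * mu) * (1 - lam * mu) + (exp (lam * mu) * lam) * Y \<omega> \<partial>M)"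
    using Y by (simp add: mu_def algebra_simps prob_space)
  also have "\<dots> \<le> (\<integral>\<omega>. exp (lam * Y \<omega>) \<partial>M)"
  proof (rule integral_mono[OF _ int])
    show "integrable M (\<lambda>\<omega>. exp (lam * mu) * (1 - lam * mu) + (exp (lam * mu) * lam) * Y \<omega>)"
      using Y by auto
    fix \<omega>
    have "exp (lam * mu) * (1 + (lam * Y \<omega> - lam * mu)) \<le> exp (lam * mu) * exp (lam * Y \<omega> - lam * mu)"
      by (intro mult_left_mono exp_ge_add_one_self) auto
    also have "\<dots> = exp (lam * Y \<omega>)" by (simp add: exp_diff)
    finally show "exp (lam * mu) * (1 - lam * mu) + (exp (lam * mu) * lam) * Y \<omega> \<le> exp (lam * Y \<omega>)"
      by (simp add: algebra_simps)
  qed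
  finally have le: "exp (lam * mu) \<le> (\<integral>\<omega>. exp (lam * Y \<omega>) \<partial>M)" .
  have "enn2real (mgf M Y lam) = (\<integral>\<omega>. exp (lam * Y \<omega>) \<partial>M)"
    unfolding eq by (simp add: integral_nonneg_AE)
  then have "lam * mu \<le> ln (enn2real (mgf M Y lam))"
    using le by (metis exp_gt_zero ln_exp ln_le_cancel_iff order_less_le_trans)
  then show ?thesis using False by (simp add: log_mgf_mgf mu_def)
qed

lemma log_mgf_lower:
  assumes Y: "Y \<in> borel_measurable M" and A: "A = {\<omega>\<in>space M. P (Y \<omega>)}"
    and pA: "0 < prob A"
    and hyp: "\<And>y. P y \<Longrightarrow> lam * x \<le> lam * y"
    and Pm: "{y. P y} \<in> sets borel"
  shows "ereal (lam * x + ln (prob A)) \<le> log_mgf M Y lam"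
proof (cases "mgf M Y lam = \<infinity>")
  case True then show ?thesis by (simp add: log_mgf_mgf)
next
  case False
  have Asets: "A \<in> sets M"
  proof -
    have "A = Y -` {y. P y} \<inter> space M" using A by auto
    then show ?thesis using measurable_sets[OF Y Pm] by simp
  qed
  have "ennreal (exp (lam * x) * prob A) = (\<integral>\<^sup>+ \<omega>. ennreal (exp (lam * x)) * indicator A \<omega> \<partial>M)"
    using Asets by (simp add: nn_integral_cmult_indicator emeasure_eq_measure ennreal_mult)
  also have "\<dots> \<le> mgf M Y lam"
    unfolding mgf_def
  proof (rule nn_integral_mono)
    fix \<omega> assume "\<omega> \<in> space M"
    show "ennreal (exp (lam * x)) * indicator A \<omega> \<le> ennreal (exp (lam * Y \<omega>))"
      using hyp[of "Y \<omega>"] by (auto simp: A indicator_def)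
  qed
  finally have le: "ennreal (exp (lam * x) * prob A) \<le> mgf M Y lam" .
  have "exp (lam * x) * prob A \<le> enn2real (mgf M Y lam)"
    using enn2real_mono[OF le] False by (simp add: less_top)
  then have "ln (exp (lam * x) * prob A) \<le> ln (enn2real (mgf M Y lam))"
    using pA by (intro ln_mono) auto
  then have "lam * x + ln (prob A) \<le> ln (enn2real (mgf M Y lam))"
    using pA by (simp add: ln_mult)
  then show ?thesis using False by (simp add: log_mgf_mgf)
qed

lemma log_mgf_mono_le:
  assumes Y: "Y \<in> borel_measurable M" and AE: "AE \<omega> in M. Y \<omega> \<le> x"
    and l12: "l1 \<le> l2" and f1: "log_mgf M Y l1 < \<infinity>" and f2: "log_mgf M Y l2 < \<infinity>"
  shows "real_of_ereal (log_mgf M Y l2) \<le> real_of_ereal (log_mgf M Y l1) + (l2 - l1) * x"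
proof -
  have m1: "mgf M Y l1 < \<infinity>" and m2: "mgf M Y l2 < \<infinity>" using f1 f2 unfolding log_mgf_fin by auto
  have "mgf M Y l2 \<le> (\<integral>\<^sup>+ \<omega>. ennreal (exp ((l2 - l1) * x)) * ennreal (exp (l1 * Y \<omega>)) \<partial>M)"
    unfolding mgf_def
  proof (rule nn_integral_mono_AE)
    show "AE \<omega> in M. ennreal (exp (l2 * Y \<omega>)) \<le> ennreal (exp ((l2 - l1) * x)) * ennreal (exp (l1 * Y \<omega>))"
      using AE
    proof eventually_elim
      case (elim \<omega>)
      have "(l2 - l1) * Y \<omega> \<le> (l2 - l1) * x" using elim l12 by (intro mult_left_mono) auto
      then have "exp (l2 * Y \<omega>) \<le> exp ((l2 - l1) * x) * exp (l1 * Y \<omega>)"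
        by (simp add: exp_add[symmetric] algebra_simps)
      then show ?case by (simp add: ennreal_mult[symmetric])
    qed
  qed
  also have "\<dots> = ennreal (exp ((l2 - l1) * x)) * mgf M Y l1"
    using Y by (simp add: nn_integral_cmult mgf_def)
  finally have le: "mgf M Y l2 \<le> ennreal (exp ((l2 - l1) * x)) * mgf M Y l1" .
  have "enn2real (mgf M Y l2) \<le> exp ((l2 - l1) * x) * enn2real (mgf M Y l1)"
    using enn2real_mono[OF le] m1 by (simp add: enn2real_mult ennreal_mult_less_top)
  then have "ln (enn2real (mgf M Y l2)) \<le> ln (exp ((l2 - l1) * x) * enn2real (mgf M Y l1))"
    using mgf_real(2)[OF Y m1] mgf_real(2)[OF Y m2] by (intro ln_mono) auto
  then show ?thesis
    using mgf_real(2,3)[OF Y m1] mgf_real(3)[OF Y m2] by (simp add: ln_mult)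
qed

lemma log_mgf_mono_ge:
  assumes Y: "Y \<in> borel_measurable M" and AE: "AE \<omega> in M. x \<le> Y \<omega>"
    and l12: "l1 \<le> l2" and f1: "log_mgf M Y l1 < \<infinity>" and f2: "log_mgf M Y l2 < \<infinity>"
  shows "real_of_ereal (log_mgf M Y l1) + (l2 - l1) * x \<le> real_of_ereal (log_mgf M Y l2)"
proof -
  have m1: "mgf M Y l1 < \<infinity>" and m2: "mgf M Y l2 < \<infinity>" using f1 f2 unfolding log_mgf_fin by auto
  have "(\<integral>\<^sup>+ \<omega>. ennreal (exp ((l2 - l1) * x)) * ennreal (exp (l1 * Y \<omega>)) \<partial>M) \<le> mgf M Y l2"
    unfolding mgf_def
  proof (rule nn_integral_mono_AE)
    show "AE \<omega> in M. ennreal (exp ((l2 - l1) * x)) * ennreal (exp (l1 * Y \<omega>)) \<le> ennreal (exp (l2 * Y \<omega>))"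
      using AE
    proof eventually_elim
      case (elim \<omega>)
      have "(l2 - l1) * x \<le> (l2 - l1) * Y \<omega>" using elim l12 by (intro mult_left_mono) auto
      then have "exp ((l2 - l1) * x) * exp (l1 * Y \<omega>) \<le> exp (l2 * Y \<omega>)"
        by (simp add: exp_add[symmetric] algebra_simps)
      then show ?case by (simp add: ennreal_mult[symmetric])
    qed
  qed
  also have "(\<integral>\<^sup>+ \<omega>. ennreal (exp ((l2 - l1) * x)) * ennreal (exp (l1 * Y \<omega>)) \<partial>M) = ennreal (exp ((l2 - l1) * x)) * mgf M Y l1"
    using Y by (simp add: nn_integral_cmult mgf_def)
  finally have le: "ennreal (exp ((l2 - l1) * x)) * mgf M Y l1 \<le> mgf M Y l2" .
  have "exp ((l2 - l1) * x) * enn2real (mgf M Y l1) \<le> enn2real (mgf M Y l2)"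
    using enn2real_mono[OF le] m2 by (simp add: enn2real_mult)
  then have "ln (exp ((l2 - l1) * x) * enn2real (mgf M Y l1)) \<le> ln (enn2real (mgf M Y l2))"
    using mgf_real(2)[OF Y m1] mgf_real(2)[OF Y m2] by (intro ln_mono) auto
  then show ?thesis
    using mgf_real(2,3)[OF Y m1] mgf_real(3)[OF Y m2] by (simp add: ln_mult)
qed

lemma mgf_sample_mean:
  assumes indep: "indep_vars (\<lambda>_. borel) (\<lambda>(l, n). X l n) ({1..k} \<times> UNIV)"
    and rv: "\<And>n. X l n \<in> borel_measurable M"
    and ident: "\<And>n. distr M borel (X l n) = distr M borel (X l 0)"
    and l: "l \<in> {1..k}" and n: "n \<ge> 1"
  shows "mgf M (sample_mean X l n) (real n * lam) = (mgf M (X l 0) lam) ^ n"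
proof -
  define Z where "Z = (\<lambda>p \<omega>. ennreal (exp (lam * (case p of (l, n) \<Rightarrow> X l n) \<omega>)))"
  have indZ: "indep_vars (\<lambda>_. borel) Z ({l} \<times> {..<n})"
    unfolding Z_def
    by (rule indep_vars_compose2[where X="\<lambda>(l, n). X l n" and M'="\<lambda>_. borel"])
       (rule indep_vars_subset[OF indep], use l in auto)
  have "mgf M (sample_mean X l n) (real n * lam) = (\<integral>\<^sup>+ \<omega>. (\<Prod>p\<in>{l} \<times> {..<n}. Z p \<omega>) \<partial>M)"
    unfolding mgf_def
  proof (rule nn_integral_cong)
    fix \<omega>
    have "(\<Prod>p\<in>{l} \<times> {..<n}. Z p \<omega>) = (\<Prod>i<n. Z (l, i) \<omega>)"
      by (rule prod_single_times)
    also have "\<dots> = ennreal (\<Prod>i<n. exp (lam * X l i \<omega>))"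
      by (simp add: Z_def prod_ennreal)
    also have "(\<Prod>i<n. exp (lam * X l i \<omega>)) = exp (real n * lam * sample_mean X l n \<omega>)"
    proof -
      have "real n * lam * sample_mean X l n \<omega> = lam * (\<Sum>i<n. X l i \<omega>)"
        using n by (simp add: sample_mean_def)
      also have "\<dots> = (\<Sum>i<n. lam * X l i \<omega>)" by (simp add: sum_distrib_left)
      finally show ?thesis by (simp add: exp_sum)
    qed
    finally show "ennreal (exp (real n * lam * sample_mean X l n \<omega>)) = (\<Prod>p\<in>{l} \<times> {..<n}. Z p \<omega>)"
      by simp
  qed
  also have "\<dots> = (\<Prod>p\<in>{l} \<times> {..<n}. \<integral>\<^sup>+ \<omega>. Z p \<omega> \<partial>M)"
    by (rule indep_vars_nn_integral[OF _ indZ]) auto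
  also have "\<dots> = (\<Prod>i<n. \<integral>\<^sup>+ \<omega>. Z (l, i) \<omega> \<partial>M)"
    by (rule prod_single_times)
  also have "\<dots> = (\<Prod>i<n. mgf M (X l 0) lam)"
  proof (rule prod.cong[OF refl])
    fix i
    have "(\<integral>\<^sup>+ \<omega>. Z (l, i) \<omega> \<partial>M) = (\<integral>\<^sup>+ y. ennreal (exp (lam * y)) \<partial>distr M borel (X l i))"
      using rv by (simp add: Z_def nn_integral_distr)
    also have "\<dots> = (\<integral>\<^sup>+ y. ennreal (exp (lam * y)) \<partial>distr M borel (X l 0))" by (subst ident[of i]) (rule refl)
    also have "\<dots> = mgf M (X l 0) lam"
      using rv by (simp add: mgf_def nn_integral_distr)
    finally show "(\<integral>\<^sup>+ \<omega>. Z (l, i) \<omega> \<partial>M) = mgf M (X l 0) lam" .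
  qed
  finally show ?thesis by simp
qed

lemma Lambda_eq:
  assumes indep: "indep_vars (\<lambda>_. borel) (\<lambda>(l, n). X l n) ({1..k} \<times> UNIV)"
    and rv: "\<And>n. X l n \<in> borel_measurable M"
    and ident: "\<And>n. distr M borel (X l n) = distr M borel (X l 0)"
    and l: "l \<in> {1..k}"
  shows "Lambda M X l lam = log_mgf M (X l 0) lam"
proof -
  have seq: "Lambda_seq M X l lam n = log_mgf M (X l 0) lam" if n: "n \<ge> 1" for n
  proof -
    have eq: "mgf M (sample_mean X l n) (real n * lam) = (mgf M (X l 0) lam) ^ n"
      by (rule mgf_sample_mean[OF indep rv ident l n])
    have npos: "0 < real n" using n by simp
    show ?thesis
    proof (cases "mgf M (X l 0) lam = \<infinity>")
      case True
      then have "mgf M (sample_mean X l n) (real n * lam) = \<infinity>"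
        using eq n by (simp add: power_eq_top_ennreal)
      then have L: "log_mgf M (sample_mean X l n) (real n * lam) = \<infinity>"
        by (simp only: log_mgf_inf_iff)
      have L0: "log_mgf M (X l 0) lam = \<infinity>" using True by (simp only: log_mgf_inf_iff)
      have "Lambda_seq M X l lam n = ereal (1 / real n) * \<infinity>"
        by (simp only: Lambda_seq_def Lambda_n_def L)
      then show ?thesis using npos L0 by simp
    next
      case False
      define c where "c = enn2real (mgf M (X l 0) lam)"
      have fin: "mgf M (X l 0) lam < \<infinity>" using False by (simp add: less_top)
      have c: "mgf M (X l 0) lam = ennreal c" "0 < c"
        using mgf_real[OF rv fin] by (auto simp: c_def)
      have "mgf M (sample_mean X l n) (real n * lam) = ennreal (c ^ n)"
        using eq c by (simp add: ennreal_power)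
      then have "log_mgf M (sample_mean X l n) (real n * lam) = ereal (ln (c ^ n))"
        using c by (simp add: log_mgf_mgf)
      also have "\<dots> = ereal (real n * ln c)" using c by (simp add: ln_realpow)
      finally have L: "log_mgf M (sample_mean X l n) (real n * lam) = ereal (real n * ln c)" .
      have L0: "log_mgf M (X l 0) lam = ereal (ln c)" using mgf_real(3)[OF rv fin] by (simp add: c_def)
      have "Lambda_seq M X l lam n = ereal (1 / real n) * ereal (real n * ln c)"
        by (simp only: Lambda_seq_def Lambda_n_def L)
      then show ?thesis using npos L0 by simp
    qed
  qed
  have "Lambda_seq M X l lam \<longlonglongrightarrow> log_mgf M (X l 0) lam"
    by (rule tendsto_eventually) (use seq in \<open>auto simp: eventually_sequentially\<close>)
  then show ?thesis unfolding Lambda_def by (rule limI)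
qed

end

lemma ereal_minus_le0_iff: "ereal a - L \<le> 0 \<longleftrightarrow> ereal a \<le> L"
  by (cases L) auto

lemma ereal_minus_mono_left: "a \<le> b \<Longrightarrow> ereal a - L \<le> ereal b - L"
  by (cases L) auto

locale ratesetup =
  fixes Lam :: "real \<Rightarrow> ereal" and mu :: real
  assumes Lam0: "Lam 0 = 0"
    and Lam_ge: "\<And>t. ereal (t * mu) \<le> Lam t"
    and diff0: "(\<lambda>t. real_of_ereal (Lam t)) differentiable at 0"
    and int0: "0 \<in> interior {t. Lam t < \<infinity>}"
begin

definition I :: "real \<Rightarrow> ereal" where "I x = (SUP t. ereal (t * x) - Lam t)"

lemma I_ge: "ereal (t * x) - Lam t \<le> I x"
  unfolding I_def by (rule SUP_upper) simp

lemma I_nn: "0 \<le> I x"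
proof -
  have "ereal (0 * x) - Lam 0 = 0" by (simp add: Lam0)
  then show ?thesis using I_ge[of 0 x] by simp
qed

lemma I_le0_iff: "I x \<le> 0 \<longleftrightarrow> (\<forall>t. ereal (t * x) \<le> Lam t)"
  unfolding I_def by (simp add: SUP_le_iff ereal_minus_le0_iff)

lemma I_mu: "I mu = 0"
proof -
  have "I mu \<le> 0" using Lam_ge by (simp add: I_le0_iff)
  then show ?thesis using I_nn[of mu] by simp
qed

lemma slope_unique:
  assumes "\<And>t. ereal (t * c) \<le> Lam t"
  shows "c = deriv (\<lambda>t. real_of_ereal (Lam t)) 0"
proof -
  define LR where "LR t = real_of_ereal (Lam t)" for t
  obtain e where e: "0 < e" "ball 0 e \<subseteq> {t. Lam t < \<infinity>}"
    using int0 by (meson mem_interior)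
  have D: "DERIV LR 0 :> deriv LR 0"
    using diff0 unfolding LR_def by (simp add: DERIV_deriv_iff_real_differentiable)
  have hD: "DERIV (\<lambda>t. LR t - t * c) 0 :> deriv LR 0 - c"
  proof -
    have "DERIV (\<lambda>t. t * c) 0 :> 1 * c" by (rule DERIV_cmult_right[OF DERIV_ident])
    from DERIV_diff[OF D this] show ?thesis by simp
  qed
  have "deriv LR 0 - c = 0"
  proof (rule DERIV_local_min[OF hD e(1)], intro allI impI)
    fix y :: real assume y: "\<bar>0 - y\<bar> < e"
    then have "Lam y < \<infinity>" using e(2) by (auto simp: dist_real_def)
    moreover have "ereal (y * c) \<le> Lam y" by (rule assms)
    ultimately have "y * c \<le> LR y" unfolding LR_def by (cases "Lam y") auto
    moreover have "LR 0 = 0" using Lam0 by (simp add: LR_def)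
    ultimately show "LR 0 - 0 * c \<le> LR y - y * c" by simp
  qed
  moreover have "(\<lambda>t. real_of_ereal (Lam t)) = LR" by (rule ext) (simp add: LR_def)
  ultimately show ?thesis by simp
qed

lemma I_zero: "I c = 0 \<Longrightarrow> c = mu"
proof -
  assume "I c = 0"
  then have "\<forall>t. ereal (t * c) \<le> Lam t" using I_le0_iff[of c] by simp
  then have "c = deriv (\<lambda>t. real_of_ereal (Lam t)) 0" using slope_unique by blast
  moreover have "mu = deriv (\<lambda>t. real_of_ereal (Lam t)) 0" using slope_unique Lam_ge by blast
  ultimately show ?thesis by simp
qed

lemma I_dec: "x \<le> y \<Longrightarrow> y \<le> mu \<Longrightarrow> I y \<le> I x"
  unfolding I_def[of y]
proof (rule SUP_least)
  fix t assume xy: "x \<le> y" and ym: "y \<le> mu"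
  show "ereal (t * y) - Lam t \<le> I x"
  proof (cases "t \<le> 0")
    case True
    have "t * y \<le> t * x" using True xy by (simp add: mult_left_mono_neg)
    then have "ereal (t * y) - Lam t \<le> ereal (t * x) - Lam t" by (rule ereal_minus_mono_left)
    also have "\<dots> \<le> I x" by (rule I_ge)
    finally show ?thesis .
  next
    case False
    have "t * y \<le> t * mu" using False ym by simp
    then have "ereal (t * y) \<le> ereal (t * mu)" by simp
    then have "ereal (t * y) \<le> Lam t" using Lam_ge[of t] by (rule order_trans)
    then have "ereal (t * y) - Lam t \<le> 0" by (simp add: ereal_minus_le0_iff)
    then show ?thesis using I_nn[of x] by (rule order_trans)
  qed
qed

lemma I_inc: "mu \<le> y \<Longrightarrow> y \<le> x \<Longrightarrow> I y \<le> I x"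
  unfolding I_def[of y]
proof (rule SUP_least)
  fix t assume ym: "mu \<le> y" and xy: "y \<le> x"
  show "ereal (t * y) - Lam t \<le> I x"
  proof (cases "0 \<le> t")
    case True
    have "t * y \<le> t * x" using True xy by (simp add: mult_left_mono)
    then have "ereal (t * y) - Lam t \<le> ereal (t * x) - Lam t" by (rule ereal_minus_mono_left)
    also have "\<dots> \<le> I x" by (rule I_ge)
    finally show ?thesis .
  next
    case False
    have "t * y \<le> t * mu" using False ym by (simp add: mult_left_mono_neg)
    then have "ereal (t * y) \<le> ereal (t * mu)" by simp
    then have "ereal (t * y) \<le> Lam t" using Lam_ge[of t] by (rule order_trans)
    then have "ereal (t * y) - Lam t \<le> 0" by (simp add: ereal_minus_le0_iff)
    then show ?thesis using I_nn[of x] by (rule order_trans)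
  qed
qed

end

locale pairsetup =
  fixes I1 I2 :: "real \<Rightarrow> ereal" and mu1 mu2 :: real
  assumes mu12: "mu2 < mu1"
    and I1_nn: "\<And>x. 0 \<le> I1 x" and I2_nn: "\<And>x. 0 \<le> I2 x"
    and I1_mu: "I1 mu1 = 0" and I2_mu: "I2 mu2 = 0"
    and I1_zero: "\<And>x. I1 x = 0 \<Longrightarrow> x = mu1" and I2_zero: "\<And>x. I2 x = 0 \<Longrightarrow> x = mu2"
    and I1_dec: "\<And>x y. x \<le> y \<Longrightarrow> y \<le> mu1 \<Longrightarrow> I1 y \<le> I1 x"
    and I1_inc: "\<And>x y. mu1 \<le> y \<Longrightarrow> y \<le> x \<Longrightarrow> I1 y \<le> I1 x"
    and I2_dec: "\<And>x y. x \<le> y \<Longrightarrow> y \<le> mu2 \<Longrightarrow> I2 y \<le> I2 x"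
    and I2_inc: "\<And>x y. mu2 \<le> y \<Longrightarrow> y \<le> x \<Longrightarrow> I2 y \<le> I2 x"
    and I1_fin: "I1 mu2 < \<infinity>" and I2_fin: "I2 mu1 < \<infinity>"
begin

definition "J = {mu2..mu1}"
definition i1 :: "real \<Rightarrow> real" where "i1 x = real_of_ereal (I1 x)"
definition i2 :: "real \<Rightarrow> real" where "i2 x = real_of_ereal (I2 x)"
definition g :: "real \<Rightarrow> real \<Rightarrow> real" where
  "g a b = Inf ((\<lambda>x. a * i1 x + b * i2 x) ` J)"
definition "C = i1 mu2 + i2 mu1"

lemma J_ne: "J \<noteq> {}" and mu1J: "mu1 \<in> J" and mu2J: "mu2 \<in> J"
  using mu12 by (auto simp: J_def)

lemma I1_J: "x \<in> J \<Longrightarrow> I1 x = ereal (i1 x) \<and> 0 \<le> i1 x \<and> i1 x \<le> i1 mu2"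
proof -
  assume x: "x \<in> J"
  have le: "I1 x \<le> I1 mu2" using x by (intro I1_dec) (auto simp: J_def)
  then have "I1 x < \<infinity>" using I1_fin by (rule order.strict_trans1)
  moreover have e2: "I1 mu2 = ereal (i1 mu2)" using I1_fin I1_nn[of mu2]
    by (cases "I1 mu2") (auto simp: i1_def)
  ultimately obtain r where r: "I1 x = ereal r" using I1_nn[of x] by (cases "I1 x") auto
  have "i1 x = r" by (simp add: i1_def r)
  then show ?thesis using le e2 r I1_nn[of x] by simp
qed

lemma I2_J: "x \<in> J \<Longrightarrow> I2 x = ereal (i2 x) \<and> 0 \<le> i2 x \<and> i2 x \<le> i2 mu1"
proof -
  assume x: "x \<in> J"
  have le: "I2 x \<le> I2 mu1" using x by (intro I2_inc) (auto simp: J_def)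
  then have "I2 x < \<infinity>" using I2_fin by (rule order.strict_trans1)
  moreover have e2: "I2 mu1 = ereal (i2 mu1)" using I2_fin I2_nn[of mu1]
    by (cases "I2 mu1") (auto simp: i2_def)
  ultimately obtain r where r: "I2 x = ereal r" using I2_nn[of x] by (cases "I2 x") auto
  have "i2 x = r" by (simp add: i2_def r)
  then show ?thesis using le e2 r I2_nn[of x] by simp
qed

lemma bdd: "0 \<le> a \<Longrightarrow> 0 \<le> b \<Longrightarrow> bdd_below ((\<lambda>x. a * i1 x + b * i2 x) ` J)"
  by (rule bdd_belowI2[of _ 0]) (use I1_J I2_J in auto)

lemma g_le: "0 \<le> a \<Longrightarrow> 0 \<le> b \<Longrightarrow> x \<in> J \<Longrightarrow> g a b \<le> a * i1 x + b * i2 x"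
  unfolding g_def by (rule cInf_lower) (auto intro: bdd)

lemma g_ge: "(\<And>x. x \<in> J \<Longrightarrow> z \<le> a * i1 x + b * i2 x) \<Longrightarrow> z \<le> g a b"
  unfolding g_def using J_ne by (intro cInf_greatest) auto

lemma g_nonneg: "0 \<le> a \<Longrightarrow> 0 \<le> b \<Longrightarrow> 0 \<le> g a b"
  by (rule g_ge) (use I1_J I2_J in auto)

lemma i1_mu1: "i1 mu1 = 0" and i2_mu2: "i2 mu2 = 0"
  using I1_mu I2_mu by (auto simp: i1_def i2_def)

lemma g_zero1: "0 \<le> b \<Longrightarrow> g 0 b = 0"
  using g_le[of 0 b mu2] g_nonneg[of 0 b] mu2J i2_mu2 by auto

lemma g_zero2: "0 \<le> a \<Longrightarrow> g a 0 = 0"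
  using g_le[of a 0 mu1] g_nonneg[of a 0] mu1J i1_mu1 by auto

lemma g_scale: "0 \<le> t \<Longrightarrow> 0 \<le> a \<Longrightarrow> 0 \<le> b \<Longrightarrow> t * a \<le> a' \<Longrightarrow> t * b \<le> b' \<Longrightarrow> t * g a b \<le> g a' b'"
proof (rule g_ge)
  fix x assume t: "0 \<le> t" and a: "0 \<le> a" and b: "0 \<le> b" and a': "t * a \<le> a'" and b': "t * b \<le> b'"
    and x: "x \<in> J"
  have "t * g a b \<le> t * (a * i1 x + b * i2 x)" using g_le[OF a b x] t by (rule mult_left_mono)
  also have "\<dots> = (t * a) * i1 x + (t * b) * i2 x" by (simp add: algebra_simps)
  also have "\<dots> \<le> a' * i1 x + b' * i2 x"
    using I1_J[OF x] I2_J[OF x] a' b' by (intro add_mono mult_right_mono) auto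
  finally show "t * g a b \<le> a' * i1 x + b' * i2 x" .
qed

lemma g_pos: "0 < a \<Longrightarrow> 0 < b \<Longrightarrow> 0 < g a b"
proof -
  assume a: "0 < a" and b: "0 < b"
  define c where "c = (mu1 + mu2) / 2"
  have cJ: "c \<in> J" using mu12 by (auto simp: J_def c_def)
  have "c \<noteq> mu1" "c \<noteq> mu2" using mu12 by (auto simp: c_def)
  then have "I1 c \<noteq> 0" using I1_zero by blast
  then have p1: "0 < i1 c" using I1_J[OF cJ] by auto
  have "I2 c \<noteq> 0" using I2_zero \<open>c \<noteq> mu2\<close> by blast
  then have p2: "0 < i2 c" using I2_J[OF cJ] by auto
  have "min (a * i1 c) (b * i2 c) \<le> g a b"
  proof (rule g_ge)
    fix x assume x: "x \<in> J"
    show "min (a * i1 c) (b * i2 c) \<le> a * i1 x + b * i2 x"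
    proof (cases "x \<le> c")
      case True
      have "I1 c \<le> I1 x" using True using mu12 by (intro I1_dec) (auto simp: c_def)
      then have "i1 c \<le> i1 x" using I1_J[OF x] I1_J[OF cJ] by auto
      then have "a * i1 c \<le> a * i1 x" using a by simp
      moreover have "0 \<le> b * i2 x" using I2_J[OF x] b by simp
      ultimately show ?thesis by linarith
    next
      case False
      have "I2 c \<le> I2 x" using False mu12 by (intro I2_inc) (auto simp: c_def)
      then have "i2 c \<le> i2 x" using I2_J[OF x] I2_J[OF cJ] by auto
      then have "b * i2 c \<le> b * i2 x" using b by simp
      moreover have "0 \<le> a * i1 x" using I1_J[OF x] a by simp
      ultimately show ?thesis by linarith
    qed
  qed
  moreover have "0 < min (a * i1 c) (b * i2 c)" using a b p1 p2 by simp
  ultimately show ?thesis by linarith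
qed

lemma g_lip1: "0 \<le> a \<Longrightarrow> 0 \<le> b \<Longrightarrow> 0 \<le> a' \<Longrightarrow> 0 \<le> b' \<Longrightarrow>
    g a' b' - C * (\<bar>a - a'\<bar> + \<bar>b - b'\<bar>) \<le> g a b"
proof (rule g_ge)
  fix x assume a: "0 \<le> a" and b: "0 \<le> b" and a': "0 \<le> a'" and b': "0 \<le> b'" and x: "x \<in> J"
  have h1: "0 \<le> i1 x" "i1 x \<le> i1 mu2" using I1_J[OF x] by auto
  have h2: "0 \<le> i2 x" "i2 x \<le> i2 mu1" using I2_J[OF x] by auto
  have "(a' - a) * i1 x \<le> \<bar>a - a'\<bar> * i1 x" using h1 by (intro mult_right_mono) auto
  then have "a' * i1 x \<le> a * i1 x + \<bar>a - a'\<bar> * i1 x" by (simp add: algebra_simps)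
  also have "\<bar>a - a'\<bar> * i1 x \<le> \<bar>a - a'\<bar> * i1 mu2" using h1 by (intro mult_left_mono) auto
  finally have e1: "a' * i1 x \<le> a * i1 x + \<bar>a - a'\<bar> * i1 mu2" by simp
  have "(b' - b) * i2 x \<le> \<bar>b - b'\<bar> * i2 x" using h2 by (intro mult_right_mono) auto
  then have "b' * i2 x \<le> b * i2 x + \<bar>b - b'\<bar> * i2 x" by (simp add: algebra_simps)
  also have "\<bar>b - b'\<bar> * i2 x \<le> \<bar>b - b'\<bar> * i2 mu1" using h2 by (intro mult_left_mono) auto
  finally have e2: "b' * i2 x \<le> b * i2 x + \<bar>b - b'\<bar> * i2 mu1" by simp
  have C1: "\<bar>a - a'\<bar> * i1 mu2 \<le> C * \<bar>a - a'\<bar>"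
    using I2_J[OF mu1J] by (simp add: C_def algebra_simps)
  have C2: "\<bar>b - b'\<bar> * i2 mu1 \<le> C * \<bar>b - b'\<bar>"
    using I1_J[OF mu2J] by (simp add: C_def algebra_simps)
  have "g a' b' \<le> a' * i1 x + b' * i2 x" by (rule g_le[OF a' b' x])
  then show "g a' b' - C * (\<bar>a - a'\<bar> + \<bar>b - b'\<bar>) \<le> a * i1 x + b * i2 x"
    using e1 e2 C1 C2 by (simp add: algebra_simps)
qed

lemma C_nonneg: "0 \<le> C" using I1_J[OF mu2J] I2_J[OF mu1J] by (simp add: C_def)

lemma g_cont: "continuous_on ({0..} \<times> {0..}) (\<lambda>p. g (fst p) (snd p))"
proof (rule lipschitz_on_continuous_on)
  show "(2 * C)-lipschitz_on ({0..} \<times> {0..}) (\<lambda>p. g (fst p) (snd p))"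
  proof (rule lipschitz_onI)
    fix p q :: "real \<times> real" assume p: "p \<in> {0..} \<times> {0..}" and q: "q \<in> {0..} \<times> {0..}"
    obtain a b where pab: "p = (a, b)" by (cases p)
    obtain a' b' where qab: "q = (a', b')" by (cases q)
    have nn: "0 \<le> a" "0 \<le> b" "0 \<le> a'" "0 \<le> b'" using p q pab qab by auto
    have d1: "\<bar>a - a'\<bar> \<le> dist p q"
      unfolding pab qab dist_Pair_Pair dist_real_def by (rule real_sqrt_sum_squares_ge1)
    have d2: "\<bar>b - b'\<bar> \<le> dist p q"
      unfolding pab qab dist_Pair_Pair dist_real_def by (rule real_sqrt_sum_squares_ge2)
    have "\<bar>g a b - g a' b'\<bar> \<le> C * (\<bar>a - a'\<bar> + \<bar>b - b'\<bar>)"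
      using g_lip1[OF nn] g_lip1[OF nn(3,4,1,2)] by (simp add: abs_minus_commute abs_le_iff)
    also have "\<dots> \<le> C * (2 * dist p q)" using d1 d2 C_nonneg by (intro mult_left_mono) auto
    finally show "dist (g (fst p) (snd p)) (g (fst q) (snd q)) \<le> 2 * C * dist p q"
      by (simp add: pab qab dist_real_def)
  qed (use C_nonneg in simp)
qed

lemma G_eq: "0 \<le> a \<Longrightarrow> 0 \<le> b \<Longrightarrow> (INF x. ereal a * I1 x + ereal b * I2 x) = ereal (g a b)"
proof (rule antisym)
  assume a: "0 \<le> a" and b: "0 \<le> b"
  define clamp where "clamp x = max mu2 (min mu1 x)" for x
  have clampJ: "clamp x \<in> J" for x using mu12 by (auto simp: clamp_def J_def)
  have cl: "ereal a * I1 (clamp x) + ereal b * I2 (clamp x) \<le> ereal a * I1 x + ereal b * I2 x" for x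
  proof -
    have "I1 (clamp x) \<le> I1 x \<and> I2 (clamp x) \<le> I2 x"
    proof (cases "x < mu2")
      case True
      then have "clamp x = mu2" using mu12 by (auto simp: clamp_def)
      then show ?thesis using True mu12 I2_mu I2_nn[of x] by (auto intro!: I1_dec)
    next
      case False
      show ?thesis
      proof (cases "x \<le> mu1")
        case True then have "clamp x = x" using False by (auto simp: clamp_def)
        then show ?thesis by simp
      next
        case F2: False
        then have "clamp x = mu1" using mu12 by (auto simp: clamp_def)
        then show ?thesis using F2 mu12 I1_mu I1_nn[of x] by (auto intro!: I2_inc)
      qed
    qed
    then show ?thesis using a b by (intro add_mono ereal_mult_left_mono) auto
  qed
  show "ereal (g a b) \<le> (INF x. ereal a * I1 x + ereal b * I2 x)"
  proof (rule INF_greatest)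
    fix x
    have "ereal (g a b) \<le> ereal (a * i1 (clamp x) + b * i2 (clamp x))"
      using g_le[OF a b clampJ] by simp
    also have "\<dots> = ereal a * I1 (clamp x) + ereal b * I2 (clamp x)"
      using I1_J[OF clampJ] I2_J[OF clampJ] by simp
    also have "\<dots> \<le> ereal a * I1 x + ereal b * I2 x" by (rule cl)
    finally show "ereal (g a b) \<le> ereal a * I1 x + ereal b * I2 x" .
  qed
next
  assume a: "0 \<le> a" and b: "0 \<le> b"
  define T where "T = (INF x. ereal a * I1 x + ereal b * I2 x)"
  have Tle: "T \<le> ereal (a * i1 x + b * i2 x)" if x: "x \<in> J" for x
  proof -
    have "T \<le> ereal a * I1 x + ereal b * I2 x" unfolding T_def by (rule INF_lower) simp
    also have "\<dots> = ereal (a * i1 x + b * i2 x)" using I1_J[OF x] I2_J[OF x] by simp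
    finally show ?thesis .
  qed
  have "T \<le> ereal (g a b)"
  proof (cases T)
    case (real t)
    have "t \<le> g a b" by (rule g_ge) (use Tle real in auto)
    then show ?thesis using real by simp
  next
    case PInf
    then show ?thesis using Tle[OF mu1J] by simp
  qed simp
  then show "(INF x. ereal a * I1 x + ereal b * I2 x) \<le> ereal (g a b)" by (simp add: T_def)
qed

end

definition splx :: "nat \<Rightarrow> (nat \<Rightarrow> real) set" where
  "splx k = {r. (\<forall>l\<in>{1..k}. 0 \<le> r l) \<and> (\<Sum>l=1..k. r l) = 1}"

lemma Min_cont:
  fixes h :: "'i \<Rightarrow> 'x::topological_space \<Rightarrow> real"
  assumes "finite A" "A \<noteq> {}" "\<And>a. a \<in> A \<Longrightarrow> continuous_on K (h a)"
  shows "continuous_on K (\<lambda>x. Min ((\<lambda>a. h a x) ` A))"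
  using assms
proof (induction A rule: finite_ne_induct)
  case (singleton a) then show ?case by simp
next
  case (insert a F)
  have "continuous_on K (\<lambda>x. min (h a x) (Min ((\<lambda>a. h a x) ` F)))"
    using insert by (intro continuous_on_min) auto
  moreover have "Min ((\<lambda>b. h b x) ` insert a F) = min (h a x) (Min ((\<lambda>a. h a x) ` F))" for x
    using insert by (simp add: Min_insert)
  ultimately show ?case by simp
qed

lemma cpt: fixes T :: "nat \<Rightarrow> real set"
  assumes "\<And>i. compact (T i)"
  shows "compact (Pi\<^sub>E UNIV T)"
proof -
  have "compactin (product_topology (\<lambda>i. euclidean) UNIV) (Pi\<^sub>E UNIV T)"
    using assms by (simp add: compactin_PiE)
  then show ?thesis by (simp add: euclidean_product_topology)
qed

locale optsetup =
  fixes k m :: nat and g :: "nat \<Rightarrow> nat \<Rightarrow> real \<Rightarrow> real \<Rightarrow> real"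
  assumes m1: "1 \<le> m" and mk: "m < k"
    and g_nonneg: "\<And>i j a b. i \<in> {1..m} \<Longrightarrow> j \<in> {m+1..k} \<Longrightarrow> 0 \<le> a \<Longrightarrow> 0 \<le> b \<Longrightarrow> 0 \<le> g i j a b"
    and g_zero1: "\<And>i j b. i \<in> {1..m} \<Longrightarrow> j \<in> {m+1..k} \<Longrightarrow> 0 \<le> b \<Longrightarrow> g i j 0 b = 0"
    and g_zero2: "\<And>i j a. i \<in> {1..m} \<Longrightarrow> j \<in> {m+1..k} \<Longrightarrow> 0 \<le> a \<Longrightarrow> g i j a 0 = 0"
    and g_pos: "\<And>i j a b. i \<in> {1..m} \<Longrightarrow> j \<in> {m+1..k} \<Longrightarrow> 0 < a \<Longrightarrow> 0 < b \<Longrightarrow> 0 < g i j a b"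
    and g_scale: "\<And>i j a b a' b' t. i \<in> {1..m} \<Longrightarrow> j \<in> {m+1..k} \<Longrightarrow> 0 \<le> t \<Longrightarrow> 0 \<le> a \<Longrightarrow> 0 \<le> b
        \<Longrightarrow> t * a \<le> a' \<Longrightarrow> t * b \<le> b' \<Longrightarrow> t * g i j a b \<le> g i j a' b'"
    and g_cont: "\<And>i j. i \<in> {1..m} \<Longrightarrow> j \<in> {m+1..k} \<Longrightarrow>
        continuous_on ({0..} \<times> {0..}) (\<lambda>p. g i j (fst p) (snd p))"
begin

definition "Pairs = {1..m} \<times> {m+1..k}"
definition V :: "(nat \<Rightarrow> real) \<Rightarrow> real" where
  "V r = Min ((\<lambda>(i,j). g i j (r i) (r j)) ` Pairs)"

definition feas2 :: "real \<Rightarrow> (nat \<Rightarrow> real) \<Rightarrow> bool" where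
  "feas2 z r \<longleftrightarrow>
     (\<forall>i\<in>{1..m}. Min ((\<lambda>j. g i j (r i) (r j)) ` {m+1..k}) = z) \<and>
     (\<forall>j\<in>{m+1..k}. Min ((\<lambda>i. g i j (r i) (r j)) ` {1..m}) = z) \<and>
     (\<Sum>l=1..k. r l) = 1 \<and> (\<forall>l\<in>{1..k}. r l > 0)"

definition opt1 :: "(nat \<Rightarrow> real) \<Rightarrow> bool" where
  "opt1 r \<longleftrightarrow> (\<exists>z. (r \<in> splx k \<and> z \<le> V r) \<and> (\<forall>z' r'. r' \<in> splx k \<and> z' \<le> V r' \<longrightarrow> z' \<le> z))"

definition opt2 :: "(nat \<Rightarrow> real) \<Rightarrow> bool" where
  "opt2 r \<longleftrightarrow> (\<exists>z. feas2 z r \<and> (\<forall>z' r'. feas2 z' r' \<longrightarrow> z' \<le> z))"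

lemma Pairs_fin: "finite Pairs" and Pairs_ne: "Pairs \<noteq> {}"
  using m1 mk by (auto simp: Pairs_def)

lemma V_ge_iff: "z \<le> V r \<longleftrightarrow> (\<forall>i\<in>{1..m}. \<forall>j\<in>{m+1..k}. z \<le> g i j (r i) (r j))"
  unfolding V_def using Pairs_fin Pairs_ne by (auto simp: Pairs_def)

lemma V_gt_iff: "z < V r \<longleftrightarrow> (\<forall>i\<in>{1..m}. \<forall>j\<in>{m+1..k}. z < g i j (r i) (r j))"
  unfolding V_def using Pairs_fin Pairs_ne by (auto simp: Pairs_def)

lemma V_le: "i \<in> {1..m} \<Longrightarrow> j \<in> {m+1..k} \<Longrightarrow> V r \<le> g i j (r i) (r j)"
  using V_ge_iff by blast

lemma splx_le1: "r \<in> splx k \<Longrightarrow> l \<in> {1..k} \<Longrightarrow> r l \<le> 1"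
  unfolding splx_def using member_le_sum[of l "{1..k}" r] by auto

lemma V_cong: "(\<And>l. l \<in> {1..k} \<Longrightarrow> r l = r' l) \<Longrightarrow> V r = V r'"
  unfolding V_def Pairs_def
  by (intro arg_cong[where f=Min] image_cong) auto

lemma exists_max: "\<exists>r0\<in>splx k. \<forall>r\<in>splx k. V r \<le> V r0"
proof -
  define T where "T l = (if l \<in> {1..k} then {0..1::real} else {0})" for l
  define K where "K = Pi\<^sub>E UNIV T \<inter> {r. (\<Sum>l=1..k. r l) = 1}"
  have "compact (Pi\<^sub>E UNIV T)" by (rule cpt) (auto simp: T_def)
  moreover have "closed {r::nat\<Rightarrow>real. (\<Sum>l=1..k. r l) = 1}"
  proof -
    have "continuous_on UNIV (\<lambda>r::nat\<Rightarrow>real. \<Sum>l=1..k. r l)"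
      by (intro continuous_on_sum) auto
    then show ?thesis
      using closed_Collect_eq[of "\<lambda>r::nat\<Rightarrow>real. \<Sum>l=1..k. r l" "\<lambda>_. 1"]
      by (simp add: continuous_on_const)
  qed
  ultimately have cK: "compact K" unfolding K_def by (rule compact_Int_closed)
  define u where "u l = (if l \<in> {1..k} then 1 / real k else 0)" for l
  have k0: "k > 0" using mk by auto
  have "u \<in> K" using k0 by (auto simp: K_def T_def u_def)
  then have Kne: "K \<noteq> {}" by auto
  have nonneg: "r \<in> K \<Longrightarrow> 0 \<le> r l" for r l
  proof -
    assume "r \<in> K"
    then have "r l \<in> T l" by (auto simp: K_def PiE_iff)
    then show ?thesis by (auto simp: T_def split: if_splits)
  qed
  have Ksub: "K \<subseteq> splx k" using nonneg by (auto simp: K_def splx_def)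
  have cont: "continuous_on K V"
    unfolding V_def
  proof (rule Min_cont[OF Pairs_fin Pairs_ne])
    fix a assume a: "a \<in> Pairs"
    obtain i j where ij: "a = (i,j)" "i \<in> {1..m}" "j \<in> {m+1..k}" using a by (auto simp: Pairs_def)
    have c1: "continuous_on K (\<lambda>r::nat\<Rightarrow>real. (r i, r j))"
      by (intro continuous_on_Pair; rule continuous_on_subset[OF continuous_on_product_coordinates]) auto
    have "continuous_on K (\<lambda>r. (\<lambda>p. g i j (fst p) (snd p)) (r i, r j))"
      by (rule continuous_on_compose2[OF g_cont[OF ij(2,3)] c1]) (auto intro: nonneg)
    then show "continuous_on K (\<lambda>r. case a of (i, j) \<Rightarrow> g i j (r i) (r j))"
      using ij by simp
  qed
  obtain r0 where r0: "r0 \<in> K" "\<And>r. r \<in> K \<Longrightarrow> V r \<le> V r0"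
    using continuous_attains_sup[OF cK Kne cont] by blast
  show ?thesis
  proof (intro bexI[of _ r0] ballI)
    fix r assume r: "r \<in> splx k"
    define r' where "r' l = (if l \<in> {1..k} then r l else 0)" for l
    have "r' \<in> K" using r splx_le1[OF r]
      by (auto simp: K_def T_def r'_def splx_def)
    moreover have "V r = V r'" by (rule V_cong) (simp add: r'_def)
    ultimately show "V r \<le> V r0" using r0 by simp
  qed (use r0 Ksub in auto)
qed

lemma uniform_pos: "\<exists>u\<in>splx k. 0 < V u"
proof -
  define u where "u l = 1 / real k" for l :: nat
  have k0: "k > 0" using mk by auto
  have "u \<in> splx k" using k0 by (auto simp: splx_def u_def)
  moreover have "0 < V u" unfolding V_gt_iff using k0 by (auto simp: u_def intro!: g_pos)
  ultimately show ?thesis by blast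
qed

lemma opt_pos:
  assumes r: "r \<in> splx k" and zs: "0 < V r" and l: "l \<in> {1..k}"
  shows "0 < r l"
proof (rule ccontr)
  assume "\<not> 0 < r l"
  with r l have rl: "r l = 0" unfolding splx_def by force
  have nn: "\<And>l. l \<in> {1..k} \<Longrightarrow> 0 \<le> r l" using r by (auto simp: splx_def)
  show False
  proof (cases "l \<le> m")
    case True
    then have "V r \<le> g l (m+1) (r l) (r (m+1))" using l mk by (intro V_le) auto
    also have "\<dots> = 0" using rl True l mk nn[of "m+1"] by (auto intro: g_zero1)
    finally show False using zs by simp
  next
    case False
    then have "V r \<le> g 1 l (r 1) (r l)" using l m1 by (intro V_le) auto
    also have "\<dots> = 0" using rl False l m1 nn[of 1] by (auto intro: g_zero2)
    finally show False using zs by simp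
  qed
qed

lemma perturb:
  assumes r: "r \<in> splx k" and pos: "\<And>l. l \<in> {1..k} \<Longrightarrow> 0 < r l" and p: "p \<in> {1..k}"
    and z: "0 < z"
    and ge: "\<And>i j. i \<in> {1..m} \<Longrightarrow> j \<in> {m+1..k} \<Longrightarrow> z \<le> g i j (r i) (r j)"
    and gt: "\<And>i j. i \<in> {1..m} \<Longrightarrow> j \<in> {m+1..k} \<Longrightarrow> i = p \<or> j = p \<Longrightarrow> z < g i j (r i) (r j)"
  shows "\<exists>r'\<in>splx k. z < V r'"
proof -
  define F where "F = {(i,j). i \<in> {1..m} \<and> j \<in> {m+1..k} \<and> (i = p \<or> j = p)}"
  have finF: "finite F" by (rule finite_subset[of _ "{1..m} \<times> {m+1..k}"]) (auto simp: F_def)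
  have rp: "0 < r p" using pos p by auto
  have ev1: "\<forall>\<^sub>F e in at_right 0. \<forall>q\<in>F. z < (1 - e / r p) * g (fst q) (snd q) (r (fst q)) (r (snd q))"
  proof (rule eventually_ball_finite[OF finF], rule ballI)
    fix q assume q: "q \<in> F"
    define c where "c = g (fst q) (snd q) (r (fst q)) (r (snd q))"
    have "z < c" using q gt unfolding F_def c_def by auto
    have "((\<lambda>e. (1 - e / r p) * c) \<longlongrightarrow> (1 - 0 / r p) * c) (at_right 0)"
      using rp by (intro tendsto_intros) auto
    then have "((\<lambda>e. (1 - e / r p) * c) \<longlongrightarrow> c) (at_right 0)" using rp by simp
    from order_tendstoD(1)[OF this \<open>z < c\<close>]
    show "\<forall>\<^sub>F e in at_right 0. z < (1 - e / r p) * g (fst q) (snd q) (r (fst q)) (r (snd q))"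
      unfolding c_def .
  qed
  have ev2: "\<forall>\<^sub>F e in at_right 0. e < r p"
    using order_tendstoD(2)[OF tendsto_ident_at rp] .
  obtain b where b: "b > 0" "\<And>e. e > 0 \<Longrightarrow> e < b \<Longrightarrow>
      (\<forall>q\<in>F. z < (1 - e / r p) * g (fst q) (snd q) (r (fst q)) (r (snd q))) \<and> e < r p"
    using eventually_conj[OF ev1 ev2] unfolding eventually_at_right_field by auto
  define e where "e = b / 2"
  have e: "0 < e" "e < r p" "\<And>q. q \<in> F \<Longrightarrow> z < (1 - e / r p) * g (fst q) (snd q) (r (fst q)) (r (snd q))"
    using b(2)[of e] b(1) by (auto simp: e_def)
  have k1: "real k - 1 > 0" using m1 mk by auto
  define d where "d = e / (real k - 1)"
  have d: "0 < d" using e k1 by (auto simp: d_def)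
  define r' where "r' l = (if l = p then r l - e else r l + d)" for l
  have r'_alt: "r' l = r l + d - (if l = p then e + d else 0)" for l by (simp add: r'_def)
  have "(\<Sum>l=1..k. r' l) = (\<Sum>l=1..k. r l) + real k * d - (e + d)"
    unfolding r'_alt using p by (simp add: sum.distrib sum_subtractf)
  also have "\<dots> = 1"
  proof -
    have kd: "(real k - 1) * d = e" using k1 by (simp add: d_def)
    then have "real k * d - d = e" by (simp add: algebra_simps)
    then show ?thesis using r by (simp add: splx_def)
  qed
  finally have sum': "(\<Sum>l=1..k. r' l) = 1" .
  have r'pos: "0 < r' l" if "l \<in> {1..k}" for l
    using pos[OF that] e d by (auto simp: r'_def)
  have r'S: "r' \<in> splx k" using sum' r'pos by (auto simp: splx_def less_imp_le)
  have "z < V r'"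
    unfolding V_gt_iff
  proof (intro ballI)
    fix i j assume i: "i \<in> {1..m}" and j: "j \<in> {m+1..k}"
    have ik: "i \<in> {1..k}" and jk: "j \<in> {1..k}" using i j mk by auto
    have ri: "0 < r i" and rj: "0 < r j" using pos ik jk by auto
    show "z < g i j (r' i) (r' j)"
    proof (cases "i = p \<or> j = p")
      case True
      define t where "t = 1 - e / r p"
      have t0: "0 \<le> t" and t1: "t \<le> 1" using e rp by (auto simp: t_def field_simps)
      have a1: "t * r i \<le> r' i"
      proof (cases "i = p")
        case True then show ?thesis using rp by (simp add: t_def r'_def field_simps)
      next
        case False
        have h: "t * r i \<le> 1 * r i" by (rule mult_right_mono[OF t1 less_imp_le[OF ri]])
        have "r' i = r i + d" using False by (simp add: r'_def)
        then show ?thesis using h d by linarith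
      qed
      have a2: "t * r j \<le> r' j"
      proof (cases "j = p")
        case True then show ?thesis using rp by (simp add: t_def r'_def field_simps)
      next
        case False
        have h: "t * r j \<le> 1 * r j" by (rule mult_right_mono[OF t1 less_imp_le[OF rj]])
        have "r' j = r j + d" using False by (simp add: r'_def)
        then show ?thesis using h d by linarith
      qed
      have "(i,j) \<in> F" using True i j by (auto simp: F_def)
      from e(3)[OF this] have "z < t * g i j (r i) (r j)" by (simp add: t_def)
      also have "\<dots> \<le> g i j (r' i) (r' j)"
        using g_scale[OF i j t0 _ _ a1 a2] ri rj by simp
      finally show ?thesis .
    next
      case False
      have ri1: "r i \<le> 1" and rj1: "r j \<le> 1" using splx_le1[OF r] ik jk by auto
      have a1: "(1 + d) * r i \<le> r' i" using False ri1 d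
        by (simp add: r'_def algebra_simps)
      have a2: "(1 + d) * r j \<le> r' j" using False rj1 d
        by (simp add: r'_def algebra_simps)
      have "z < (1 + d) * z" using z d by simp
      also have "\<dots> \<le> (1 + d) * g i j (r i) (r j)" using ge[OF i j] d by simp
      also have "\<dots> \<le> g i j (r' i) (r' j)"
        using g_scale[OF i j _ _ _ a1 a2] ri rj d by simp
      finally show ?thesis .
    qed
  qed
  then show ?thesis using r'S by blast
qed


lemma feas2_V:
  assumes "feas2 z r" shows "r \<in> splx k" "V r = z"
proof -
  have rows: "\<And>i. i \<in> {1..m} \<Longrightarrow> Min ((\<lambda>j. g i j (r i) (r j)) ` {m+1..k}) = z"
    and sum: "(\<Sum>l=1..k. r l) = 1" and pos: "\<And>l. l \<in> {1..k} \<Longrightarrow> r l > 0"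
    using assms by (auto simp: feas2_def)
  show "r \<in> splx k" using sum pos by (auto simp: splx_def less_imp_le)
  have ne: "{m+1..k} \<noteq> {}" using mk by auto
  have "z \<le> V r" unfolding V_ge_iff
  proof (intro ballI)
    fix i j assume i: "i \<in> {1..m}" and j: "j \<in> {m+1..k}"
    have "z = Min ((\<lambda>j. g i j (r i) (r j)) ` {m+1..k})" using rows[OF i] by simp
    also have "\<dots> \<le> g i j (r i) (r j)" using j by (intro Min_le) auto
    finally show "z \<le> g i j (r i) (r j)" .
  qed
  moreover have "V r \<le> z"
  proof -
    have "Min ((\<lambda>j. g 1 j (r 1) (r j)) ` {m+1..k}) \<in> (\<lambda>j. g 1 j (r 1) (r j)) ` {m+1..k}"
      using ne by (intro Min_in) auto
    then obtain j where j: "j \<in> {m+1..k}" "g 1 j (r 1) (r j) = z" using rows[of 1] m1 by auto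
    then show ?thesis using V_le[of 1 j r] m1 by auto
  qed
  ultimately show "V r = z" by simp
qed

lemma tight:
  assumes r: "r \<in> splx k" and rmax: "\<And>r'. r' \<in> splx k \<Longrightarrow> V r' \<le> V r"
  shows "feas2 (V r) r"
proof -
  obtain u where u: "u \<in> splx k" "0 < V u" using uniform_pos by blast
  have zpos: "0 < V r" using rmax[OF u(1)] u(2) by simp
  have pos: "\<And>l. l \<in> {1..k} \<Longrightarrow> 0 < r l" using opt_pos[OF r zpos] .
  have ge: "\<And>i j. i \<in> {1..m} \<Longrightarrow> j \<in> {m+1..k} \<Longrightarrow> V r \<le> g i j (r i) (r j)"
    using V_le by blast
  have rows: "Min ((\<lambda>j. g i j (r i) (r j)) ` {m+1..k}) = V r" if i: "i \<in> {1..m}" for i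
  proof (rule antisym)
    show "V r \<le> Min ((\<lambda>j. g i j (r i) (r j)) ` {m+1..k})"
      using mk ge[OF i] by (subst Min_ge_iff) auto
    show "Min ((\<lambda>j. g i j (r i) (r j)) ` {m+1..k}) \<le> V r"
    proof (rule ccontr)
      assume "\<not> ?thesis"
      then have "V r < Min ((\<lambda>j. g i j (r i) (r j)) ` {m+1..k})" by simp
      then have "\<forall>a\<in>(\<lambda>j. g i j (r i) (r j)) ` {m+1..k}. V r < a"
        by (subst (asm) Min_gr_iff) (use mk in auto)
      then have gt: "\<And>j. j \<in> {m+1..k} \<Longrightarrow> V r < g i j (r i) (r j)" by auto
      have "\<exists>r'\<in>splx k. V r < V r'"
        using i mk by (intro perturb[OF r pos _ zpos ge, of i]) (auto intro: gt)
      then show False using rmax by force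
    qed
  qed
  have cols: "Min ((\<lambda>i. g i j (r i) (r j)) ` {1..m}) = V r" if j: "j \<in> {m+1..k}" for j
  proof (rule antisym)
    show "V r \<le> Min ((\<lambda>i. g i j (r i) (r j)) ` {1..m})"
      using m1 ge j by (subst Min_ge_iff) auto
    show "Min ((\<lambda>i. g i j (r i) (r j)) ` {1..m}) \<le> V r"
    proof (rule ccontr)
      assume "\<not> ?thesis"
      then have "V r < Min ((\<lambda>i. g i j (r i) (r j)) ` {1..m})" by simp
      then have "\<forall>a\<in>(\<lambda>i. g i j (r i) (r j)) ` {1..m}. V r < a"
        by (subst (asm) Min_gr_iff) (use m1 in auto)
      then have gt: "\<And>i. i \<in> {1..m} \<Longrightarrow> V r < g i j (r i) (r j)" by auto
      have "\<exists>r'\<in>splx k. V r < V r'"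
        using j m1 by (intro perturb[OF r pos _ zpos ge, of j]) (auto intro: gt)
      then show False using rmax by force
    qed
  qed
  show ?thesis unfolding feas2_def using rows cols r pos by (auto simp: splx_def)
qed

theorem opt_equiv: "opt1 r \<longleftrightarrow> opt2 r"
proof -
  obtain r0 where r0: "r0 \<in> splx k" "\<And>r. r \<in> splx k \<Longrightarrow> V r \<le> V r0"
    using exists_max by blast
  have f0: "feas2 (V r0) r0" using tight r0 by blast
  have opt1_iff: "opt1 r \<longleftrightarrow> r \<in> splx k \<and> V r = V r0"
  proof
    assume "opt1 r"
    then obtain z where z: "r \<in> splx k" "z \<le> V r" "\<And>z' r'. r' \<in> splx k \<Longrightarrow> z' \<le> V r' \<Longrightarrow> z' \<le> z"
      unfolding opt1_def by blast
    have "V r0 \<le> z" using z(3)[OF r0(1)] by simp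
    then show "r \<in> splx k \<and> V r = V r0" using z(1,2) r0(2)[OF z(1)] by simp
  next
    assume a: "r \<in> splx k \<and> V r = V r0"
    show "opt1 r" unfolding opt1_def
      by (rule exI[of _ "V r"]) (use a r0 in force)
  qed
  show ?thesis
  proof
    assume "opt1 r"
    then have a: "r \<in> splx k" "V r = V r0" using opt1_iff by auto
    have "feas2 (V r) r" using tight[OF a(1)] r0(2) a(2) by simp
    moreover have "z' \<le> V r" if "feas2 z' r'" for z' r'
      using feas2_V[OF that] r0(2) a(2) by metis
    ultimately show "opt2 r" unfolding opt2_def by blast
  next
    assume "opt2 r"
    then obtain z where z: "feas2 z r" "\<And>z' r'. feas2 z' r' \<Longrightarrow> z' \<le> z"
      unfolding opt2_def by blast
    have "V r0 \<le> z" using z(2)[OF f0] .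
    moreover have "V r = z" "r \<in> splx k" using feas2_V[OF z(1)] by auto
    ultimately show "opt1 r" using opt1_iff r0(2) by force
  qed
qed

end

lemma deriv_le_slope:
  fixes f :: "real \<Rightarrow> real"
  assumes S: "open S" "t \<in> S" and D: "DERIV f t :> d"
    and hyp: "\<And>a b. a \<in> S \<Longrightarrow> b \<in> S \<Longrightarrow> a \<le> b \<Longrightarrow> f b \<le> f a + (b - a) * x"
  shows "d \<le> x"
proof (rule ccontr)
  assume "\<not> d \<le> x"
  then have pos: "0 < d - x" by simp
  have hD: "DERIV (\<lambda>s. f s - s * x) t :> d - x"
  proof -
    have "DERIV (\<lambda>s. s * x) t :> 1 * x" by (rule DERIV_cmult_right[OF DERIV_ident])
    from DERIV_diff[OF D this] show ?thesis by simp
  qed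
  obtain d1 where d1: "d1 > 0" "\<And>h. h > 0 \<Longrightarrow> h < d1 \<Longrightarrow> f t - t * x < f (t + h) - (t + h) * x"
    using DERIV_pos_inc_right[OF hD pos] by blast
  obtain e where e: "e > 0" "ball t e \<subseteq> S" using S by (meson openE)
  define h where "h = min d1 e / 2"
  have h: "h > 0" "h < d1" "h < e" using d1 e by (auto simp: h_def)
  have "t + h \<in> S" using e h by (auto simp: dist_real_def)
  from hyp[OF S(2) this] have "f (t + h) \<le> f t + h * x" using h by simp
  moreover have "f t - t * x < f (t + h) - (t + h) * x" using d1(2)[OF h(1,2)] .
  ultimately show False by (simp add: algebra_simps)
qed

lemma deriv_ge_slope:
  fixes f :: "real \<Rightarrow> real"
  assumes S: "open S" "t \<in> S" and D: "DERIV f t :> d"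
    and hyp: "\<And>a b. a \<in> S \<Longrightarrow> b \<in> S \<Longrightarrow> a \<le> b \<Longrightarrow> f a + (b - a) * x \<le> f b"
  shows "x \<le> d"
proof (rule ccontr)
  assume "\<not> x \<le> d"
  then have neg: "d - x < 0" by simp
  have hD: "DERIV (\<lambda>s. f s - s * x) t :> d - x"
  proof -
    have "DERIV (\<lambda>s. s * x) t :> 1 * x" by (rule DERIV_cmult_right[OF DERIV_ident])
    from DERIV_diff[OF D this] show ?thesis by simp
  qed
  obtain d1 where d1: "d1 > 0" "\<And>h. h > 0 \<Longrightarrow> h < d1 \<Longrightarrow> f t - t * x > f (t + h) - (t + h) * x"
    using DERIV_neg_dec_right[OF hD neg] by blast
  obtain e where e: "e > 0" "ball t e \<subseteq> S" using S by (meson openE)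
  define h where "h = min d1 e / 2"
  have h: "h > 0" "h < d1" "h < e" using d1 e by (auto simp: h_def)
  have "t + h \<in> S" using e h by (auto simp: dist_real_def)
  from hyp[OF S(2) this] have "f t + h * x \<le> f (t + h)" using h by simp
  moreover have "f t - t * x > f (t + h) - (t + h) * x" using d1(2)[OF h(1,2)] .
  ultimately show False by (simp add: algebra_simps)
qed

lemma ereal_minus_le_aux: "ereal b \<le> L \<Longrightarrow> ereal a - L \<le> ereal (a - b)"
  by (cases L) auto

context prob_space
begin

lemma tail_pos:
  assumes Y: "Y \<in> borel_measurable M"
    and diff: "(\<lambda>t. real_of_ereal (log_mgf M Y t)) differentiable_on interior {t. log_mgf M Y t < \<infinity>}"
    and xF: "x \<in> interior ((\<lambda>t. deriv (\<lambda>t. real_of_ereal (log_mgf M Y t)) t) ` interior {t. log_mgf M Y t < \<infinity>})"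
  shows "0 < prob {\<omega>\<in>space M. x \<le> Y \<omega>}" "0 < prob {\<omega>\<in>space M. Y \<omega> \<le> x}"
proof -
  define LR where "LR t = real_of_ereal (log_mgf M Y t)" for t
  define S where "S = interior {t. log_mgf M Y t < \<infinity>}"
  have LR_eq: "(\<lambda>t. real_of_ereal (log_mgf M Y t)) = LR" by (rule ext) (simp add: LR_def)
  have oS: "open S" by (simp add: S_def)
  have SD: "\<And>t. t \<in> S \<Longrightarrow> log_mgf M Y t < \<infinity>" using interior_subset unfolding S_def by blast
  have DER: "DERIV LR t :> deriv LR t" if t: "t \<in> S" for t
  proof -
    have "LR differentiable (at t within S)" using diff t unfolding LR_eq S_def differentiable_on_def by blast
    then have "LR differentiable (at t)" using at_within_open[OF t oS] by simp
    then show ?thesis by (simp add: DERIV_deriv_iff_real_differentiable)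
  qed
  obtain e where e: "e > 0" "ball x e \<subseteq> (\<lambda>t. deriv LR t) ` S"
    using xF unfolding LR_eq S_def[symmetric] by (meson mem_interior)
  have "x + e/2 \<in> ball x e" "x - e/2 \<in> ball x e" using e by (auto simp: dist_real_def)
  then have i1: "x + e/2 \<in> (\<lambda>t. deriv LR t) ` S" and i2: "x - e/2 \<in> (\<lambda>t. deriv LR t) ` S"
    using e(2) by blast+
  obtain t1 where t1: "t1 \<in> S" "deriv LR t1 = x + e/2" using i1 by force
  obtain t2 where t2: "t2 \<in> S" "deriv LR t2 = x - e/2" using i2 by force
  have meas1: "{\<omega>\<in>space M. x \<le> Y \<omega>} \<in> sets M" using Y by measurable
  have meas2: "{\<omega>\<in>space M. Y \<omega> \<le> x} \<in> sets M" using Y by measurable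
  show "0 < prob {\<omega>\<in>space M. x \<le> Y \<omega>}"
  proof (rule ccontr)
    assume "\<not> ?thesis"
    then have "prob {\<omega>\<in>space M. x \<le> Y \<omega>} = 0" using measure_nonneg[of M] by (simp add: order.antisym)
    then have "AE \<omega> in M. \<not> x \<le> Y \<omega>" using prob_Collect_eq_0[OF meas1] by simp
    then have AE: "AE \<omega> in M. Y \<omega> \<le> x" by eventually_elim simp
    have "deriv LR t1 \<le> x"
    proof (rule deriv_le_slope[OF oS t1(1) DER[OF t1(1)]])
      fix a b assume "a \<in> S" "b \<in> S" "a \<le> b"
      then show "LR b \<le> LR a + (b - a) * x"
        unfolding LR_def using log_mgf_mono_le[OF Y AE _ SD SD] by blast
    qed
    then show False using t1 e by simp
  qed
  show "0 < prob {\<omega>\<in>space M. Y \<omega> \<le> x}"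
  proof (rule ccontr)
    assume "\<not> ?thesis"
    then have "prob {\<omega>\<in>space M. Y \<omega> \<le> x} = 0" using measure_nonneg[of M] by (simp add: order.antisym)
    then have "AE \<omega> in M. \<not> Y \<omega> \<le> x" using prob_Collect_eq_0[OF meas2] by simp
    then have AE: "AE \<omega> in M. x \<le> Y \<omega>" by eventually_elim simp
    have "x \<le> deriv LR t2"
    proof (rule deriv_ge_slope[OF oS t2(1) DER[OF t2(1)]])
      fix a b assume "a \<in> S" "b \<in> S" "a \<le> b"
      then show "LR a + (b - a) * x \<le> LR b"
        unfolding LR_def using log_mgf_mono_ge[OF Y AE _ SD SD] by blast
    qed
    then show False using t2 e by simp
  qed
qed

lemma rate_fin:
  assumes Y: "Y \<in> borel_measurable M"
    and p1: "0 < prob {\<omega>\<in>space M. x \<le> Y \<omega>}" and p2: "0 < prob {\<omega>\<in>space M. Y \<omega> \<le> x}"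
  shows "(SUP t. ereal (t * x) - log_mgf M Y t) < \<infinity>"
proof -
  define C where "C = max (- ln (prob {\<omega>\<in>space M. x \<le> Y \<omega>})) (- ln (prob {\<omega>\<in>space M. Y \<omega> \<le> x}))"
  have "(SUP t. ereal (t * x) - log_mgf M Y t) \<le> ereal C"
  proof (rule SUP_least)
    fix t
    show "ereal (t * x) - log_mgf M Y t \<le> ereal C"
    proof (cases "0 \<le> t")
      case True
      have "ereal (t * x + ln (prob {\<omega>\<in>space M. x \<le> Y \<omega>})) \<le> log_mgf M Y t"
        by (rule log_mgf_lower[OF Y refl p1]) (use True in \<open>auto intro: mult_left_mono\<close>)
      then have "ereal (t * x) - log_mgf M Y t \<le> ereal (t * x - (t * x + ln (prob {\<omega>\<in>space M. x \<le> Y \<omega>})))"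
        by (rule ereal_minus_le_aux)
      also have "\<dots> \<le> ereal C" by (simp add: C_def)
      finally show ?thesis .
    next
      case False
      have "ereal (t * x + ln (prob {\<omega>\<in>space M. Y \<omega> \<le> x})) \<le> log_mgf M Y t"
        by (rule log_mgf_lower[OF Y refl p2]) (use False in \<open>auto intro: mult_left_mono_neg\<close>)
      then have "ereal (t * x) - log_mgf M Y t \<le> ereal (t * x - (t * x + ln (prob {\<omega>\<in>space M. Y \<omega> \<le> x})))"
        by (rule ereal_minus_le_aux)
      also have "\<dots> \<le> ereal C" by (simp add: C_def)
      finally show ?thesis .
    qed
  qed
  then show ?thesis by (rule order.strict_trans1) simp
qed

end

lemma ratesetup_l:
  assumes prob: "prob_space M" and rv: "\<And>n. X l n \<in> borel_measurable M"
    and indep: "prob_space.indep_vars M (\<lambda>_. borel) (\<lambda>(l, n). X l n) ({1..k} \<times> UNIV)"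
    and ident: "\<And>n. distr M borel (X l n) = distr M borel (X l 0)"
    and l: "l \<in> {1..k}"
    and A2: "0 \<in> interior (dom_Lambda M X l)"
    and A3: "LambdaR M X l differentiable_on interior (dom_Lambda M X l)"
  shows "ratesetup (Lambda M X l) (prob_space.expectation M (X l 0))"
proof -
  interpret P: prob_space M by (rule prob)
  have LE: "Lambda M X l = log_mgf M (X l 0)" by (rule ext, rule P.Lambda_eq[OF indep rv ident l])
  obtain e where e: "e > 0" "ball 0 e \<subseteq> dom_Lambda M X l" using A2 by (meson mem_interior)
  have "e/2 \<in> ball 0 e" "-(e/2) \<in> ball 0 e" using e by auto
  then have "e/2 \<in> dom_Lambda M X l" "-(e/2) \<in> dom_Lambda M X l" using e(2) by blast+
  then have f1: "log_mgf M (X l 0) (e/2) < \<infinity>" and f2: "log_mgf M (X l 0) (-(e/2)) < \<infinity>"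
    by (simp_all add: dom_Lambda_def LE)
  have int: "integrable M (X l 0)"
    by (rule P.integrable_of_mgf[OF rv _ f1 f2]) (use e in simp)
  show ?thesis
  proof (rule ratesetup.intro)
    show "Lambda M X l 0 = 0" by (simp add: LE P.log_mgf_zero)
    show "ereal (t * prob_space.expectation M (X l 0)) \<le> Lambda M X l t" for t
      using P.log_mgf_jensen[OF int] by (simp add: LE)
    have LR: "LambdaR M X l = (\<lambda>t. real_of_ereal (Lambda M X l t))" by (rule ext) (simp add: LambdaR_def)
    have "LambdaR M X l differentiable (at 0 within interior (dom_Lambda M X l))"
      using A3 A2 by (simp add: differentiable_on_def)
    then have "LambdaR M X l differentiable (at 0)" using at_within_open[OF A2] by simp
    then show "(\<lambda>t. real_of_ereal (Lambda M X l t)) differentiable at 0" by (simp add: LR)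
    show "0 \<in> interior {t. Lambda M X l t < \<infinity>}" using A2 by (simp add: dom_Lambda_def)
  qed
qed

lemma rate_fin_l:
  assumes prob: "prob_space M" and rv: "\<And>n. X l n \<in> borel_measurable M"
    and indep: "prob_space.indep_vars M (\<lambda>_. borel) (\<lambda>(l, n). X l n) ({1..k} \<times> UNIV)"
    and ident: "\<And>n. distr M borel (X l n) = distr M borel (X l 0)"
    and l: "l \<in> {1..k}"
    and A3: "LambdaR M X l differentiable_on interior (dom_Lambda M X l)"
    and xF: "x \<in> interior (F_set M X l)"
  shows "rate_fun M X l x < \<infinity>"
proof -
  interpret P: prob_space M by (rule prob)
  have LE: "Lambda M X l = log_mgf M (X l 0)" by (rule ext, rule P.Lambda_eq[OF indep rv ident l])
  have LR: "LambdaR M X l = (\<lambda>t. real_of_ereal (log_mgf M (X l 0) t))" by (rule ext) (simp add: LambdaR_def LE)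
  have DL: "dom_Lambda M X l = {t. log_mgf M (X l 0) t < \<infinity>}" by (simp add: dom_Lambda_def LE)
  have FS: "F_set M X l = (\<lambda>t. deriv (\<lambda>t. real_of_ereal (log_mgf M (X l 0) t)) t) ` interior {t. log_mgf M (X l 0) t < \<infinity>}"
    by (simp add: F_set_def LR DL)
  have diff: "(\<lambda>t. real_of_ereal (log_mgf M (X l 0) t)) differentiable_on interior {t. log_mgf M (X l 0) t < \<infinity>}"
    using A3 by (simp add: LR DL)
  have xF': "x \<in> interior ((\<lambda>t. deriv (\<lambda>t. real_of_ereal (log_mgf M (X l 0) t)) t) ` interior {t. log_mgf M (X l 0) t < \<infinity>})"
    using xF by (simp add: FS)
  have "(SUP t. ereal (t * x) - log_mgf M (X l 0) t) < \<infinity>"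
    using P.rate_fin[OF rv P.tail_pos[OF rv diff xF']] .
  then show ?thesis by (simp add: rate_fun_def LE)
qed

lemma Min_ereal_img:
  assumes "finite S" "S \<noteq> {}" "\<And>x. x \<in> S \<Longrightarrow> F x = ereal (f x)"
  shows "Min (F ` S) = ereal (Min (f ` S))"
proof -
  have "F ` S = ereal ` (f ` S)" using assms(3) by (auto simp: image_iff)
  moreover have "mono ereal" by (auto intro: monoI)
  ultimately show ?thesis using mono_Min_commute[of ereal "f ` S"] assms(1,2) by simp
qed

lemma chain_lt:
  fixes f :: "nat \<Rightarrow> real"
  assumes ord: "\<And>l. l \<in> {1..<k} \<Longrightarrow> f l > f (Suc l)"
  shows "1 \<le> i \<Longrightarrow> i < j \<Longrightarrow> j \<le> k \<Longrightarrow> f j < f i"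
proof (induction j)
  case 0 then show ?case by simp
next
  case (Suc j)
  show ?case
  proof (cases "i < j")
    case True
    then have "f j < f i" using Suc by simp
    moreover have "f (Suc j) < f j" using ord[of j] Suc True by auto
    ultimately show ?thesis by simp
  next
    case False
    then have "i = j" using Suc by simp
    then show ?thesis using ord[of j] Suc by auto
  qed
qed

theorem lemma5:
  fixes M :: "'a measure" and X :: "nat \<Rightarrow> nat \<Rightarrow> 'a \<Rightarrow> real" and k m :: nat
  assumes k2: "k \<ge> 2" and m1: "1 \<le> m" and mk: "m < k"
    and prob: "prob_space M"
    and rv: "\<And>l n. l \<in> {1..k} \<Longrightarrow> X l n \<in> borel_measurable M"
    and indep: "prob_space.indep_vars M (\<lambda>_. borel) (\<lambda>(l, n). X l n) ({1..k} \<times> UNIV)"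
    and ident: "\<And>l n. l \<in> {1..k} \<Longrightarrow> distr M borel (X l n) = distr M borel (X l 0)"
    and ordered: "\<And>l. l \<in> {1..<k} \<Longrightarrow>
                    prob_space.expectation M (X l 0) > prob_space.expectation M (X (Suc l) 0)"
    and A1: "\<And>l lam. l \<in> {1..k} \<Longrightarrow> convergent (Lambda_seq M X l lam)"
    and A2: "\<And>l. l \<in> {1..k} \<Longrightarrow> 0 \<in> interior (dom_Lambda M X l)"
    and A3_diff: "\<And>l. l \<in> {1..k} \<Longrightarrow>
                    LambdaR M X l differentiable_on interior (dom_Lambda M X l)"
    and A3_sconv: "\<And>l. l \<in> {1..k} \<Longrightarrow>
                    strictly_convex_on (interior (dom_Lambda M X l)) (LambdaR M X l)"
    and A3_cont: "\<And>l. l \<in> {1..k} \<Longrightarrow>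
                    continuous_on (interior (dom_Lambda M X l)) (LambdaR M X l)"
    and A3_steep: "\<And>l. l \<in> {1..k} \<Longrightarrow> steep (dom_Lambda M X l) (LambdaR M X l)"
    and A4: "{prob_space.expectation M (X k 0) .. prob_space.expectation M (X 1 0)}
               \<subseteq> (\<Inter>l\<in>{1..k}. interior (F_set M X l))"
  shows "optimal_P1 M X k m r \<longleftrightarrow> optimal_P2 M X k m r"
proof -
  interpret P: prob_space M by (rule prob)
  define mu where "mu l = P.expectation (X l 0)" for l
  have rs: "ratesetup (Lambda M X l) (mu l)" if l: "l \<in> {1..k}" for l
    unfolding mu_def
    by (rule ratesetup_l[OF prob rv[OF l] indep ident[OF l] l A2[OF l] A3_diff[OF l]])
  have RF: "rate_fun M X l = ratesetup.I (Lambda M X l)" if l: "l \<in> {1..k}" for l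
    by (rule ext) (simp add: rate_fun_def ratesetup.I_def[OF rs[OF l]])
  have mu_lt: "\<And>i j. 1 \<le> i \<Longrightarrow> i < j \<Longrightarrow> j \<le> k \<Longrightarrow> mu j < mu i"
    by (rule chain_lt[of k mu]) (use ordered in \<open>auto simp: mu_def\<close>)
  have mu_le: "mu k \<le> mu l \<and> mu l \<le> mu 1" if "l \<in> {1..k}" for l
    using mu_lt[of l k] mu_lt[of 1 l] that by (cases "l = k"; cases "l = 1") (auto simp: less_imp_le)
  have fin: "rate_fun M X l x < \<infinity>" if l: "l \<in> {1..k}" and x: "x \<in> {mu k..mu 1}" for l x
  proof -
    have "x \<in> interior (F_set M X l)" using A4 x l by (auto simp: mu_def)
    then show ?thesis by (rule rate_fin_l[OF prob rv[OF l] indep ident[OF l] l A3_diff[OF l]])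
  qed
  have ps: "pairsetup (rate_fun M X i) (rate_fun M X j) (mu i) (mu j)"
    if i: "i \<in> {1..m}" and j: "j \<in> {m+1..k}" for i j
  proof -
    have ik: "i \<in> {1..k}" and jk: "j \<in> {1..k}" using i j mk by auto
    interpret Ri: ratesetup "Lambda M X i" "mu i" by (rule rs[OF ik])
    interpret Rj: ratesetup "Lambda M X j" "mu j" by (rule rs[OF jk])
    have Ei: "rate_fun M X i = Ri.I" by (rule RF[OF ik])
    have Ej: "rate_fun M X j = Rj.I" by (rule RF[OF jk])
    show ?thesis
    proof (rule pairsetup.intro)
      show "mu j < mu i" using mu_lt[of i j] i j by auto
      show "rate_fun M X i (mu j) < \<infinity>" using fin[OF ik, of "mu j"] mu_le[OF jk] by auto
      show "rate_fun M X j (mu i) < \<infinity>" using fin[OF jk, of "mu i"] mu_le[OF ik] by auto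
      show "\<And>x. 0 \<le> rate_fun M X i x" unfolding Ei by (rule Ri.I_nn)
      show "\<And>x. 0 \<le> rate_fun M X j x" unfolding Ej by (rule Rj.I_nn)
      show "rate_fun M X i (mu i) = 0" unfolding Ei by (rule Ri.I_mu)
      show "rate_fun M X j (mu j) = 0" unfolding Ej by (rule Rj.I_mu)
      show "\<And>x. rate_fun M X i x = 0 \<Longrightarrow> x = mu i" unfolding Ei by (rule Ri.I_zero)
      show "\<And>x. rate_fun M X j x = 0 \<Longrightarrow> x = mu j" unfolding Ej by (rule Rj.I_zero)
      show "\<And>x y. x \<le> y \<Longrightarrow> y \<le> mu i \<Longrightarrow> rate_fun M X i y \<le> rate_fun M X i x"
        unfolding Ei by (rule Ri.I_dec)
      show "\<And>x y. mu i \<le> y \<Longrightarrow> y \<le> x \<Longrightarrow> rate_fun M X i y \<le> rate_fun M X i x"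
        unfolding Ei by (rule Ri.I_inc)
      show "\<And>x y. x \<le> y \<Longrightarrow> y \<le> mu j \<Longrightarrow> rate_fun M X j y \<le> rate_fun M X j x"
        unfolding Ej by (rule Rj.I_dec)
      show "\<And>x y. mu j \<le> y \<Longrightarrow> y \<le> x \<Longrightarrow> rate_fun M X j y \<le> rate_fun M X j x"
        unfolding Ej by (rule Rj.I_inc)
    qed
  qed
  define gg where "gg i j a b = real_of_ereal (G M X i j a b)" for i j a b
  have Geq: "G M X i j a b = ereal (gg i j a b) \<and>
      gg i j a b = pairsetup.g (rate_fun M X i) (rate_fun M X j) (mu i) (mu j) a b"
    if i: "i \<in> {1..m}" and j: "j \<in> {m+1..k}" and a: "0 \<le> a" and b: "0 \<le> b" for i j a b
  proof -
    have "G M X i j a b = ereal (pairsetup.g (rate_fun M X i) (rate_fun M X j) (mu i) (mu j) a b)"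
      unfolding G_def by (rule pairsetup.G_eq[OF ps[OF i j] a b])
    then show ?thesis by (simp add: gg_def)
  qed
  have os: "optsetup k m gg"
  proof (rule optsetup.intro)
    show "1 \<le> m" by (rule m1)
    show "m < k" by (rule mk)
    show "0 \<le> gg i j a b" if "i \<in> {1..m}" "j \<in> {m+1..k}" "0 \<le> a" "0 \<le> b" for i j a b
      using Geq[OF that] pairsetup.g_nonneg[OF ps[OF that(1,2)] that(3,4)] by simp
    show "gg i j 0 b = 0" if "i \<in> {1..m}" "j \<in> {m+1..k}" "0 \<le> b" for i j b
      using Geq[OF that(1,2) _ that(3)] pairsetup.g_zero1[OF ps[OF that(1,2)] that(3)] by simp
    show "gg i j a 0 = 0" if "i \<in> {1..m}" "j \<in> {m+1..k}" "0 \<le> a" for i j a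
      using Geq[OF that(1,2) that(3)] pairsetup.g_zero2[OF ps[OF that(1,2)] that(3)] by simp
    show "0 < gg i j a b" if "i \<in> {1..m}" "j \<in> {m+1..k}" "0 < a" "0 < b" for i j a b
      using Geq[OF that(1,2)] pairsetup.g_pos[OF ps[OF that(1,2)] that(3,4)] that(3,4) by simp
    show "t * gg i j a b \<le> gg i j a' b'"
      if "i \<in> {1..m}" "j \<in> {m+1..k}" "0 \<le> t" "0 \<le> a" "0 \<le> b" "t * a \<le> a'" "t * b \<le> b'"
      for i j a b a' b' t
    proof -
      have "0 \<le> a'" using that(3,4,6) by (meson mult_nonneg_nonneg order_trans)
      moreover have "0 \<le> b'" using that(3,5,7) by (meson mult_nonneg_nonneg order_trans)
      ultimately show ?thesis
        using Geq[OF that(1,2)] pairsetup.g_scale[OF ps[OF that(1,2)] that(3-7)] that(4,5) by simp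
    qed
    show "continuous_on ({0..} \<times> {0..}) (\<lambda>p. gg i j (fst p) (snd p))"
      if "i \<in> {1..m}" "j \<in> {m+1..k}" for i j
    proof -
      have "continuous_on ({0..} \<times> {0..})
          (\<lambda>p. pairsetup.g (rate_fun M X i) (rate_fun M X j) (mu i) (mu j) (fst p) (snd p))"
        by (rule pairsetup.g_cont[OF ps[OF that]])
      moreover have "pairsetup.g (rate_fun M X i) (rate_fun M X j) (mu i) (mu j) (fst p) (snd p) = gg i j (fst p) (snd p)"
        if p: "p \<in> {0..} \<times> {0..}" for p
      proof -
        have "0 \<le> fst p" "0 \<le> snd p" using p by (auto simp: mem_Times_iff)
        then show ?thesis using Geq[OF \<open>i \<in> {1..m}\<close> \<open>j \<in> {m+1..k}\<close>, of "fst p" "snd p"] by simp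
      qed
      ultimately show ?thesis by (rule continuous_on_eq)
    qed
  qed
  have F1: "feasible_P1 M X k m z r' \<longleftrightarrow> r' \<in> splx k \<and> z \<le> optsetup.V k m gg r'" for z r'
  proof (cases "\<forall>l\<in>{1..k}. 0 \<le> r' l")
    case True
    have "(0 \<le> G M X i j (r' i) (r' j) - ereal z) \<longleftrightarrow> z \<le> gg i j (r' i) (r' j)"
      if "i \<in> {1..m}" "j \<in> {m+1..k}" for i j
    proof -
      have "r' i \<ge> 0" "r' j \<ge> 0" using True that mk by auto
      then show ?thesis using Geq[OF that] by simp
    qed
    then show ?thesis using True
      unfolding feasible_P1_def splx_def optsetup.V_ge_iff[OF os] by auto
  next
    case False
    then show ?thesis unfolding feasible_P1_def splx_def by auto
  qed
  have F2: "feasible_P2 M X k m z r' \<longleftrightarrow> optsetup.feas2 k m gg z r'" for z r'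
  proof (cases "\<forall>l\<in>{1..k}. 0 < r' l")
    case True
    have R: "Min ((\<lambda>j. G M X i j (r' i) (r' j)) ` {m+1..k}) = ereal (Min ((\<lambda>j. gg i j (r' i) (r' j)) ` {m+1..k}))"
      if i: "i \<in> {1..m}" for i
    proof (rule Min_ereal_img)
      show "{m+1..k} \<noteq> {}" using mk by auto
      fix j assume j: "j \<in> {m+1..k}"
      have "r' i \<ge> 0" "r' j \<ge> 0" using True i j mk by (auto intro: less_imp_le)
      then show "G M X i j (r' i) (r' j) = ereal (gg i j (r' i) (r' j))" using Geq[OF i j] by simp
    qed simp
    have C: "Min ((\<lambda>i. G M X i j (r' i) (r' j)) ` {1..m}) = ereal (Min ((\<lambda>i. gg i j (r' i) (r' j)) ` {1..m}))"
      if j: "j \<in> {m+1..k}" for j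
    proof (rule Min_ereal_img)
      show "{1..m} \<noteq> {}" using m1 by auto
      fix i assume i: "i \<in> {1..m}"
      have "r' i \<ge> 0" "r' j \<ge> 0" using True i j mk by (auto intro: less_imp_le)
      then show "G M X i j (r' i) (r' j) = ereal (gg i j (r' i) (r' j))" using Geq[OF i j] by simp
    qed simp
    show ?thesis unfolding feasible_P2_def optsetup.feas2_def[OF os] using R C True by simp
  next
    case False
    then show ?thesis unfolding feasible_P2_def optsetup.feas2_def[OF os] by auto
  qed
  have "optimal_P1 M X k m r \<longleftrightarrow> optsetup.opt1 k m gg r"
    unfolding optimal_P1_def optsetup.opt1_def[OF os] F1 by blast
  moreover have "optimal_P2 M X k m r \<longleftrightarrow> optsetup.opt2 k m gg r"
    unfolding optimal_P2_def optsetup.opt2_def[OF os] F2 by blast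
  ultimately show ?thesis using optsetup.opt_equiv[OF os] by simp
qed

end
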